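(* Let $k\ge 2$ and $n>2^k$ be integers and put $c=2^k-2$. Let $h,w$ be the positive integers such that $$h(n-1)-wc=\begin{cases}1 & \text{if } \gcd(c,n-1)=1,\\ 0 & \text{otherwise,}\end{cases}$$ with $0<w\le n-2$ minimal. Then the value of the search game on the path $\{0,\dots,n-1\}$ with budget $k$, i.e. $$\max_{x\in\Delta_k}\ \min_{v\in V}\ \sum_{T\in\mathcal{T}_k:\, v\in C(T)} x_T \;=\; \min_{y\in\Delta_V}\ \max_{T\in\mathcal{T}_k}\ \sum_{v\in C(T)} y_v,$$ equals $\frac{h}{w}$. Moreover, the output $x$ of the Greedy Algorithm is an optimal strategy for the seeker; if $\gcd(c,n-1)=d>1$ the hider strategy $y^{\mathrm{nc}}$ is an optimal strategy for the hider, and if $\gcd(c,n-1)=1$ the hider strategy $y^{\mathrm{cp}}$ is an optimal strategy for the hider.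
   Context: Let $G$ be the path graph with vertex set $V=\{0,1,\dots,n-1\}$ and edges $\{v,v+1\}$, $0\le v\le n-2$. A search strategy for a tree $H$ is a rooted binary tree $T$ defined recursively: a single node is a search strategy for any tree $H$; otherwise the root $\rho$ is labeled with an edge $e(\rho)=uv$ of $H$ and has two children whose subtrees are search strategies for the components $H_u,H_v$ of $H-e(\rho)$ containing $u$ and $v$. Each node $\nu$ of $T$ gets a vertex set $V(\nu)$: the root gets $V(H)$, and if the root is labeled $uv$ its two children get $V(H_u)$ and $V(H_v)$, recursively. A vertex $v$ is covered by $T$ if $V(\lambda)=\{v\}$ for some leaf $\lambda$; $C(T)$ is the set of covered vertices. The height of $T$ is the maximal number of edges on a root-to-leaf path; $\mathcal{T}_k$ is the set of search strategies for $G$ of height at most $k$. $\Delta_k$ is the set of probability distributions $x=(x_T)_{T\in\mathcal{T}_k}$ and $\Delta_V$ the set of probability distributions $y=(y_v)_{v\in V}$. Intervals: for integers $u$, $\ell$ and $r\ge1$, $[u\oplus\ell]_r=\{w \bmod r: u\le w\le u+\ell-1\}$ (empty if $\ell\le 0$); the subscript is omitted when $r=n$. For every $v\in V\setminus\{1\}$ there is a strategy $T_v\in\mathcal{T}_k$ with $C(T_v)=[v\oplus(c+1)]$ if $\{0,n-1\}\cap[v\oplus(c+1)]\neq\emptyset$ and $C(T_v)=[v\oplus c]$ otherwise; fix such $T_v$. Greedy Algorithm: set $v=c+1$ and $\mathcal{X}=\{T_0\}$; while $v\notin\{0,1\}$: add $T_v$ to $\mathcal{X}$ and set $v=(v+c)\bmod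 (n-1)$. Output $x_T=1/|\mathcal{X}|$ for $T\in\mathcal{X}$ and $x_T=0$ otherwise. Hider strategy $y^{\mathrm{nc}}$ (case $d=\gcd(c,n-1)>1$, $w=(n-1)/d$): $y_v=0$ if $v$ is a multiple of $d$ and $y_v=\frac{1}{w(d-1)}$ otherwise. Hider strategy $y^{\mathrm{cp}}$ (case $\gcd(c,n-1)=1$): let $g(v)=v\frac{h}{wc}$ and $r=\lfloor c/h\rfloor$. Set $y_0=y_{n-1}=0$. Starting at $v=1$, repeatedly: choose the largest $r^*\in\{r,r+1\}$ with $g(v+r^*-1)\le \sum_{i=1}^{v-1}y_i+\frac1w$, set $y_i=\frac{1}{r^*w}$ for $i\in\{v,\dots,v+r^*-1\}$ (this block is called a segment), and replace $v$ by $v+r^*$; stop once $v>n-2$. *)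

theory Defs
  imports Complex_Main
begin

text \<open>Every component arising when edges of a path are deleted is a subpath, i.e. an
interval [a..b]. A strategy is a leaf or a node labelled with the edge {e, e+1};
its left child is a strategy for [a..e], its right child for [e+1..b].\<close>

datatype strat = Leaf | Node nat strat strat

fun valid :: "nat \<Rightarrow> nat \<Rightarrow> strat \<Rightarrow> bool" where
  "valid a b Leaf = True"
| "valid a b (Node e l r) = (a \<le> e \<and> e < b \<and> valid a e l \<and> valid (Suc e) b r)"

text \<open>covered vertices: leaves whose vertex set is a singleton\<close>
fun covered :: "nat \<Rightarrow> nat \<Rightarrow> strat \<Rightarrow> nat set" where
  "covered a b Leaf = (if a = b then {a} else {})"
| "covered a b (Node e l r) = covered a e l \<union> covered (Suc e) b r"

fun height :: "strat \<Rightarrow> nat" where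
  "height Leaf = 0"
| "height (Node e l r) = Suc (max (height l) (height r))"

definition strategies :: "nat \<Rightarrow> nat \<Rightarrow> strat set" where
  "strategies n k = {T. valid 0 (n - 1) T \<and> height T \<le> k}"

definition C :: "nat \<Rightarrow> strat \<Rightarrow> nat set" where
  "C n T = covered 0 (n - 1) T"

definition seeker_dists :: "nat \<Rightarrow> nat \<Rightarrow> (strat \<Rightarrow> real) set" where
  "seeker_dists n k = {x. (\<forall>T\<in>strategies n k. 0 \<le> x T) \<and> (\<Sum>T\<in>strategies n k. x T) = 1}"

definition hider_dists :: "nat \<Rightarrow> (nat \<Rightarrow> real) set" where
  "hider_dists n = {y. (\<forall>v<n. 0 \<le> y v) \<and> (\<Sum>v<n. y v) = 1}"

definition seeker_payoff :: "nat \<Rightarrow> nat \<Rightarrow> (strat \<Rightarrow> real) \<Rightarrow> nat \<Rightarrow> real" where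
  "seeker_payoff n k x v = (\<Sum>T\<in>{T\<in>strategies n k. v \<in> C n T}. x T)"

definition hider_payoff :: "nat \<Rightarrow> (nat \<Rightarrow> real) \<Rightarrow> strat \<Rightarrow> real" where
  "hider_payoff n y T = (\<Sum>v\<in>C n T. y v)"

definition lower_value :: "nat \<Rightarrow> nat \<Rightarrow> real" where
  "lower_value n k = (SUP x\<in>seeker_dists n k. Min (seeker_payoff n k x ` {..<n}))"

definition upper_value :: "nat \<Rightarrow> nat \<Rightarrow> real" where
  "upper_value n k = (INF y\<in>hider_dists n. Max (hider_payoff n y ` strategies n k))"

definition intv :: "nat \<Rightarrow> nat \<Rightarrow> nat \<Rightarrow> nat set" where
  "intv u l r = {w mod r | w. u \<le> w \<and> w < u + l}"

definition cover_target :: "nat \<Rightarrow> nat \<Rightarrow> nat \<Rightarrow> nat set" where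
  "cover_target n c v =
     (if {0, n - 1} \<inter> intv v (c + 1) n \<noteq> {} then intv v (c + 1) n else intv v c n)"

definition greedy_v :: "nat \<Rightarrow> nat \<Rightarrow> nat \<Rightarrow> nat" where
  "greedy_v n c j = ((\<lambda>v. (v + c) mod (n - 1)) ^^ j) (c + 1)"

definition greedy_stop :: "nat \<Rightarrow> nat \<Rightarrow> nat" where
  "greedy_stop n c = (LEAST j. greedy_v n c j \<in> {0, 1})"

definition greedy_set :: "nat \<Rightarrow> nat \<Rightarrow> (nat \<Rightarrow> strat) \<Rightarrow> strat set" where
  "greedy_set n c Tv = insert (Tv 0) {Tv (greedy_v n c j) | j. j < greedy_stop n c}"

definition greedy_x :: "nat \<Rightarrow> nat \<Rightarrow> (nat \<Rightarrow> strat) \<Rightarrow> strat \<Rightarrow> real" where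
  "greedy_x n c Tv T = (if T \<in> greedy_set n c Tv then 1 / real (card (greedy_set n c Tv)) else 0)"

definition y_nc :: "nat \<Rightarrow> nat \<Rightarrow> nat \<Rightarrow> real" where
  "y_nc n c v = (let d = gcd c (n - 1); w = (n - 1) div d in
                 if d dvd v then 0 else 1 / (real w * real (d - 1)))"

text \<open>One round of the segment construction; state = (current y, current v).
 The largest r* in {r, r+1} satisfying the condition is taken (r is used if r+1 fails).\<close>
definition cp_step :: "nat \<Rightarrow> nat \<Rightarrow> nat \<Rightarrow> nat \<Rightarrow> (nat \<Rightarrow> real) \<times> nat \<Rightarrow> (nat \<Rightarrow> real) \<times> nat" where
  "cp_step n c h w = (\<lambda>(y, v).
     if v > n - 2 then (y, v) else
     (let g = (\<lambda>u::nat. real u * (real h / (real w * real c)));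
          r = nat \<lfloor>real c / real h\<rfloor>;
          S = (\<Sum>i\<in>{1..<v}. y i);
          rs = (if g (v + (r + 1) - 1) \<le> S + 1 / real w then r + 1 else r)
      in ((\<lambda>i. if v \<le> i \<and> i < v + rs then 1 / (real rs * real w) else y i), v + rs)))"

text \<open>start with y = 0 (in particular y_0 = y_{n-1} = 0) and v = 1; n rounds suffice
 since each round advances v by r* >= 1 and stopped states are fixed points.\<close>
definition y_cp :: "nat \<Rightarrow> nat \<Rightarrow> nat \<Rightarrow> nat \<Rightarrow> nat \<Rightarrow> real" where
  "y_cp n c h w = fst ((cp_step n c h w ^^ n) (\<lambda>_. 0, 1))"

end

theory Submission
  imports Defs
begin

fun cuts :: "strat \<Rightarrow> nat set" where
  "cuts Leaf = {}"
| "cuts (Node e l r) = insert e (cuts l \<union> cuts r)"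

lemma finite_cuts: "finite (cuts T)"
  by (induction T) auto

lemma card_cuts: "card (cuts T) \<le> 2 ^ height T - 1"
proof (induction T)
  case Leaf then show ?case by simp
next
  case (Node e l r)
  have "card (cuts (Node e l r)) \<le> Suc (card (cuts l \<union> cuts r))"
    by (simp add: card_insert_le_m1 finite_cuts card_insert_if)
  also have "\<dots> \<le> Suc (card (cuts l) + card (cuts r))"
    using card_Un_le by auto
  also have "\<dots> \<le> 2 ^ height (Node e l r) - 1"
  proof -
    have p1': "(1::nat) \<le> 2 ^ height l" and p2': "(1::nat) \<le> 2 ^ height r" by simp_all
    have q1: "card (cuts l) + 1 \<le> 2 ^ height l" using Node.IH(1) p1' by linarith
    have q2: "card (cuts r) + 1 \<le> 2 ^ height r" using Node.IH(2) p2' by linarith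
    have a: "(2::nat) ^ height l \<le> 2 ^ max (height l) (height r)" by (simp add: power_increasing)
    have b: "(2::nat) ^ height r \<le> 2 ^ max (height l) (height r)" by (simp add: power_increasing)
    have p1: "(1::nat) \<le> 2 ^ height l" and p2: "(1::nat) \<le> 2 ^ height r" by simp_all
    have "2 ^ height (Node e l r) = 2 * (2::nat) ^ max (height l) (height r)" by simp
    then show ?thesis using a b q1 q2 by linarith
  qed
  finally show ?case .
qed

lemma valid_cuts: "valid a b T \<Longrightarrow> cuts T \<subseteq> {a..<b}"
  by (induction a b T rule: valid.induct) auto

lemma covered_prop:
  "valid a b T \<Longrightarrow> v \<in> covered a b T \<Longrightarrow>
     a \<le> v \<and> v \<le> b \<and> (a < v \<longrightarrow> v - 1 \<in> cuts T) \<and> (v < b \<longrightarrow> v \<in> cuts T)"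
proof (induction a b T arbitrary: v rule: valid.induct)
  case (1 a b) then show ?case by (auto split: if_splits)
next
  case (2 a b e l r)
  show ?case
  proof (cases "v \<in> covered a e l")
    case True
    with 2 have "a \<le> v \<and> v \<le> e \<and> (a < v \<longrightarrow> v - 1 \<in> cuts l) \<and> (v < e \<longrightarrow> v \<in> cuts l)" by auto
    then show ?thesis using 2 by (cases "v = e") auto
  next
    case False
    then have "v \<in> covered (Suc e) b r" using 2 by auto
    with 2 have "Suc e \<le> v \<and> v \<le> b \<and> (Suc e < v \<longrightarrow> v - 1 \<in> cuts r) \<and> (v < b \<longrightarrow> v \<in> cuts r)" by auto
    then show ?thesis using 2 by (cases "v = Suc e") auto
  qed
qed

definition Ed :: "nat set \<Rightarrow> nat set" where
  "Ed S = S \<union> (\<lambda>v. v - 1) ` S"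

lemma C_sub: assumes "T \<in> strategies n k" "0 < n" shows "C n T \<subseteq> {..<n}"
proof
  fix v assume "v \<in> C n T"
  then have "v \<le> n - 1" using covered_prop assms(1) unfolding strategies_def C_def by blast
  then show "v \<in> {..<n}" using assms(2) by simp
qed

lemma Ed_bound:
  assumes "T \<in> strategies n k" "S \<subseteq> C n T" "S \<subseteq> {1..n-2}"
  shows "card (Ed S) \<le> 2 ^ k - 1"
proof -
  have v: "valid 0 (n-1) T" and hk: "height T \<le> k" using assms(1) unfolding strategies_def by auto
  have "Ed S \<subseteq> cuts T"
  proof
    fix x assume "x \<in> Ed S"
    then obtain v where vS: "v \<in> S" and x: "x = v \<or> x = v - 1" unfolding Ed_def by auto
    have "v \<in> covered 0 (n-1) T" using vS assms(2) unfolding C_def by auto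
    from covered_prop[OF v this] have "(0 < v \<longrightarrow> v - 1 \<in> cuts T) \<and> (v < n - 1 \<longrightarrow> v \<in> cuts T)" by auto
    moreover have "1 \<le> v" "v \<le> n - 2" using vS assms(3) by auto
    ultimately show "x \<in> cuts T" using x by auto
  qed
  then have "card (Ed S) \<le> card (cuts T)" by (simp add: card_mono finite_cuts)
  also have "\<dots> \<le> 2 ^ height T - 1" by (rule card_cuts)
  also have "\<dots> \<le> 2 ^ k - 1" using hk by (simp add: diff_le_mono power_increasing)
  finally show ?thesis .
qed

definition treesN :: "nat \<Rightarrow> nat \<Rightarrow> strat set" where
  "treesN N k = {T. height T \<le> k \<and> cuts T \<subseteq> {..<N}}"

lemma finite_treesN: "finite (treesN N k)"
proof (induction k)
  case 0
  have "treesN N 0 \<subseteq> {Leaf}" unfolding treesN_def by (auto elim: height.elims)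
  then show ?case using finite_subset by blast
next
  case (Suc k)
  have "treesN N (Suc k) \<subseteq> insert Leaf ((\<lambda>(e, l, r). Node e l r) ` ({..<N} \<times> treesN N k \<times> treesN N k))"
  proof
    fix T assume T: "T \<in> treesN N (Suc k)"
    show "T \<in> insert Leaf ((\<lambda>(e, l, r). Node e l r) ` ({..<N} \<times> treesN N k \<times> treesN N k))"
    proof (cases T)
      case Leaf then show ?thesis by simp
    next
      case (Node e l r)
      then have "e < N" "l \<in> treesN N k" "r \<in> treesN N k" using T unfolding treesN_def by auto
      then show ?thesis using Node by force
    qed
  qed
  moreover have "finite (insert Leaf ((\<lambda>(e, l, r). Node e l r) ` ({..<N} \<times> treesN N k \<times> treesN N k)))"
    using Suc by auto
  ultimately show ?case using finite_subset by blast
qed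

lemma finite_strategies: "finite (strategies n k)"
proof -
  have "strategies n k \<subseteq> treesN n k"
    unfolding strategies_def treesN_def using valid_cuts by fastforce
  then show ?thesis using finite_treesN finite_subset by blast
qed

lemma Leaf_strategies: "Leaf \<in> strategies n k"
  unfolding strategies_def by simp

lemma Ed_Un: "Ed (A \<union> B) = Ed A \<union> Ed B" unfolding Ed_def by auto

lemma Ed_interval: "1 \<le> a \<Longrightarrow> a \<le> b \<Longrightarrow> Ed {a..b} = {a-1..b}"
  unfolding Ed_def
proof (intro equalityI subsetI)
  fix x assume "1 \<le> a" "a \<le> b" "x \<in> {a-1..b}"
  then show "x \<in> {a..b} \<union> (\<lambda>v. v - 1) ` {a..b}"
    by (cases "x = a - 1") (auto intro!: image_eqI[where x=a])
qed auto

lemma finite_Ed: "finite S \<Longrightarrow> finite (Ed S)" unfolding Ed_def by auto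

lemma peel:
  fixes Y G :: "nat \<Rightarrow> real"
  assumes Y0: "\<And>u. 0 \<le> Y u"
    and win: "\<And>a l. (\<Sum>u\<in>{a<..a+l}. Y u) \<le> G l"
    and SG: "\<And>l1 l2. G l1 + G l2 \<le> G (l1 + l2 + 1)"
  shows "finite S \<Longrightarrow> S \<noteq> {} \<Longrightarrow> 0 \<notin> S \<Longrightarrow> sum Y S \<le> G (card (Ed S) - 1)"
proof (induction "card S" arbitrary: S rule: less_induct)
  case less
  define b where "b = Max S"
  have bS: "b \<in> S" using less.prems b_def by simp
  define A where "A = {a. a \<le> b \<and> {a..b} \<subseteq> S}"
  have "b \<in> A" using bS A_def by auto
  define a where "a = (LEAST a. a \<in> A)"
  have aA: "a \<in> A" using \<open>b \<in> A\<close> a_def by (metis LeastI)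
  have amin: "\<And>x. x \<in> A \<Longrightarrow> a \<le> x" using a_def by (simp add: Least_le)
  have ab: "a \<le> b" and abS: "{a..b} \<subseteq> S" using aA A_def by auto
  have "a \<in> S" using abS ab by auto
  then have a1: "1 \<le> a" using less.prems(3) by (cases a) auto
  have am1: "a - 1 \<notin> S"
  proof
    assume "a - 1 \<in> S"
    have "{a-1..b} \<subseteq> S"
    proof
      fix x assume "x \<in> {a-1..b}"
      then show "x \<in> S" using abS \<open>a - 1 \<in> S\<close> by (cases "x = a - 1") auto
    qed
    then have "a - 1 \<in> A" using ab A_def by auto
    then show False using amin a1 by fastforce
  qed
  define S0 where "S0 = S - {a..b}"
  have finS0: "finite S0" using less.prems S0_def by simp
  have S0lt: "\<And>x. x \<in> S0 \<Longrightarrow> x < a - 1"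
  proof -
    fix x assume x: "x \<in> S0"
    then have "x \<le> b" using b_def less.prems S0_def by simp
    then have "x < a" using x S0_def by auto
    moreover have "x \<noteq> a - 1" using x am1 S0_def by auto
    ultimately show "x < a - 1" by linarith
  qed
  have Sdec: "S = S0 \<union> {a..b}" using abS S0_def by auto
  have EdS0: "Ed S0 \<subseteq> {..<a-1}" using S0lt unfolding Ed_def by fastforce
  have EdS: "Ed S = Ed S0 \<union> {a-1..b}" using Sdec Ed_Un Ed_interval[OF a1 ab] by simp
  have disj: "Ed S0 \<inter> {a-1..b} = {}" using EdS0 by auto
  have cardE: "card (Ed S) = card (Ed S0) + (b - a + 2)"
    using EdS disj finite_Ed[OF finS0] card_Un_disjoint[of "Ed S0" "{a-1..b}"] a1 ab by simp
  have dj: "S0 \<inter> {a..b} = {}" using S0_def by auto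
  have sumS: "sum Y S = sum Y S0 + sum Y {a..b}"
    using Sdec finS0 dj sum.union_disjoint[of S0 "{a..b}" Y] by simp
  have "{a..b} = {a-1<..(a-1)+(b-a+1)}" using a1 ab by auto
  then have win1: "sum Y {a..b} \<le> G (b - a + 1)" using win by metis
  show ?case
  proof (cases "S0 = {}")
    case True
    then show ?thesis using sumS win1 cardE by (simp add: Ed_def)
  next
    case False
    have "S0 \<subset> S" using S0_def bS ab by auto
    then have "card S0 < card S" using less.prems(1) by (simp add: psubset_card_mono)
    then have IH: "sum Y S0 \<le> G (card (Ed S0) - 1)"
      using less.hyps finS0 False less.prems(3) S0_def by blast
    have "Ed S0 \<noteq> {}" using False unfolding Ed_def by auto
    then have "card (Ed S0) \<ge> 1" using finite_Ed[OF finS0] by (simp add: Suc_leI card_gt_0_iff)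
    then have "card (Ed S) - 1 = (card (Ed S0) - 1) + (b - a + 1) + 1" using cardE ab by simp
    then have "G (card (Ed S0) - 1) + G (b - a + 1) \<le> G (card (Ed S) - 1)"
      using SG[of "card (Ed S0) - 1" "b - a + 1"] by simp
    then show ?thesis using sumS IH win1 by linarith
  qed
qed

lemma G_nonneg:
  fixes Y G :: "nat \<Rightarrow> real"
  assumes Y0: "\<And>u. 0 \<le> Y u" and win: "\<And>a l. (\<Sum>u\<in>{a<..a+l}. Y u) \<le> G l"
  shows "0 \<le> G l"
proof -
  have "0 \<le> sum Y {0<..0+l}" using Y0 by (simp add: sum_nonneg)
  then show ?thesis using win[of 0 l] by linarith
qed

lemma peel_bound:
  fixes Y G :: "nat \<Rightarrow> real"
  assumes Y0: "\<And>u. 0 \<le> Y u"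
    and win: "\<And>a l. (\<Sum>u\<in>{a<..a+l}. Y u) \<le> G l"
    and SG: "\<And>l1 l2. G l1 + G l2 \<le> G (l1 + l2 + 1)"
    and fin: "finite S" and S0: "0 \<notin> S" and cE: "card (Ed S) \<le> B + 1"
  shows "sum Y S \<le> G B"
proof (cases "S = {}")
  case True then show ?thesis using G_nonneg[OF Y0 win] by simp
next
  case False
  have 1: "sum Y S \<le> G (card (Ed S) - 1)" using peel[OF Y0 win SG fin False S0] .
  have mono: "\<And>l l'. l \<le> l' \<Longrightarrow> G l \<le> G l'"
  proof -
    fix l l' :: nat assume "l \<le> l'"
    show "G l \<le> G l'"
    proof (cases "l = l'")
      case False
      with \<open>l \<le> l'\<close> have "l' = l + (l' - l - 1) + 1" by simp
      have "G l + G (l' - l - 1) \<le> G l'" using SG[of l "l' - l - 1"] \<open>l' = l + (l' - l - 1) + 1\<close> by simp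
      then show ?thesis using G_nonneg[OF Y0 win, of "l' - l - 1"] by linarith
    qed simp
  qed
  show ?thesis using 1 mono[of "card (Ed S) - 1" B] cE by linarith
qed

lemma div_add_bounds:
  fixes a b q p :: nat assumes "0 < p"
  shows "a*q div p + b*q div p \<le> (a+b)*q div p" and "(a+b)*q div p \<le> a*q div p + b*q div p + 1"
proof -
  have e: "(a+b)*q = a*q + b*q" by (simp add: algebra_simps)
  have d: "(a*q + b*q) div p = a*q div p + b*q div p + (a*q mod p + b*q mod p) div p"
    by (rule div_add1_eq)
  have "a*q mod p < p" "b*q mod p < p" using assms by auto
  then have "a*q mod p + b*q mod p < p * 2" by linarith
  then have "(a*q mod p + b*q mod p) div p < 2" by (simp add: div_less_iff_less_mult assms)
  moreover have d2: "(a+b)*q div p = a*q div p + b*q div p + (a*q mod p + b*q mod p) div p"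
    using d e by simp
  ultimately show "a*q div p + b*q div p \<le> (a+b)*q div p" "(a+b)*q div p \<le> a*q div p + b*q div p + 1"
    by linarith+
qed

lemma convex3:
  fixes al be ga P1 P2 P3 Q1 Q2 Q3 :: real
  assumes "0 \<le> al" "0 \<le> be" "0 \<le> ga" "al + be + ga = 1"
    and "P1 \<le> Q1" "Q1 \<le> P1 + 1" "P2 \<le> Q2" "Q2 \<le> P2 + 1" "P3 \<le> Q3" "Q3 \<le> P3 + 1"
  shows "al*P1 + be*P2 + ga*P3 \<le> al*Q1 + be*Q2 + ga*Q3"
    and "al*Q1 + be*Q2 + ga*Q3 \<le> al*P1 + be*P2 + ga*P3 + 1"
proof -
  have 1: "al*P1 \<le> al*Q1" "be*P2 \<le> be*Q2" "ga*P3 \<le> ga*Q3"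
    using assms by (simp_all add: mult_left_mono)
  have 2: "al*Q1 \<le> al*(P1+1)" "be*Q2 \<le> be*(P2+1)" "ga*Q3 \<le> ga*(P3+1)"
    using assms by (simp_all add: mult_left_mono)
  show "al*P1 + be*P2 + ga*P3 \<le> al*Q1 + be*Q2 + ga*Q3" using 1 by linarith
  have 3: "al*(P1+1) + be*(P2+1) + ga*(P3+1) = al*P1 + be*P2 + ga*P3 + 1"
    using assms(4) by (simp add: algebra_simps)
  show "al*Q1 + be*Q2 + ga*Q3 \<le> al*P1 + be*P2 + ga*P3 + 1"
    using 2 3 by linarith
qed

locale segs =
  fixes p q :: nat
  assumes p0: "0 < p" and pq: "p \<le> q"
begin

definition E :: "nat \<Rightarrow> nat" where "E m = m * q div p"
definition L :: "nat \<Rightarrow> nat" where "L m = E (Suc m) - E m"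
definition seg :: "nat \<Rightarrow> nat" where "seg u = (u * p - 1) div q"
definition Y :: "nat \<Rightarrow> real" where "Y u = 1 / real (L (seg u))"
definition Gw :: "nat \<Rightarrow> real" where "Gw i = (\<Sum>u\<in>{0<..i}. Y u)"
definition Psi :: "nat \<Rightarrow> real \<Rightarrow> real" where "Psi m th = real (E m) + th * real (L m)"
definition Phi :: "real \<Rightarrow> real" where "Phi x = Psi (nat \<lfloor>x\<rfloor>) (x - of_int \<lfloor>x\<rfloor>)"

lemma E_add: "E a + E b \<le> E (a+b)" "E (a+b) \<le> E a + E b + 1"
  unfolding E_def using div_add_bounds[OF p0] by auto

lemma E0: "E 0 = 0" unfolding E_def by simp

lemma E_mono: "a \<le> b \<Longrightarrow> E a \<le> E b"
  unfolding E_def by (simp add: div_le_mono)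

lemma E1: "1 \<le> E 1" unfolding E_def using div_le_mono[OF pq, of p] p0 by simp

lemma L_ge1: "1 \<le> L m"
proof -
  have "E m + E 1 \<le> E (Suc m)" using E_add(1)[of m 1] by simp
  then show ?thesis unfolding L_def using E1 by linarith
qed

lemma E_Suc: "E (Suc m) = E m + L m"
  unfolding L_def using E_mono[of m "Suc m"] by simp

lemma seg_eq: assumes "E m < u" "u \<le> E (Suc m)" shows "seg u = m"
proof -
  have "m * q < u * p" using assms(1) p0 unfolding E_def by (simp add: div_less_iff_less_mult mult.commute)
  then have a: "m * q \<le> u * p - 1" by linarith
  have "u * p \<le> Suc m * q" using assms(2) p0 unfolding E_def by (simp add: less_eq_div_iff_mult_less_eq mult.commute)
  moreover have "0 < u * p" using assms(1) p0 by simp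
  ultimately have b: "u * p - 1 < Suc m * q" by linarith
  have q0: "0 < q" using p0 pq by simp
  have "m \<le> (u*p - 1) div q" using a q0 by (simp add: less_eq_div_iff_mult_less_eq)
  moreover have "(u*p - 1) div q < Suc m" using b q0 by (simp add: div_less_iff_less_mult)
  ultimately show ?thesis unfolding seg_def by simp
qed

lemma Gw_E: "Gw (E m + t) = real m + real t / real (L m)" if "t \<le> L m" for m t
  using that
proof (induction m arbitrary: t)
  case 0
  then show ?case
  proof (induction t)
    case 0 then show ?case by (simp add: Gw_def E0)
  next
    case (Suc t)
    have "{0<..Suc t} = insert (Suc t) {0<..t}" by auto
    then have "Gw (E 0 + Suc t) = Gw (E 0 + t) + Y (Suc t)"
      unfolding Gw_def E0 by simp
    moreover have "seg (Suc t) = 0" using Suc.prems E_Suc[of 0] E0 by (intro seg_eq) auto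
    ultimately show ?case using Suc by (simp add: Y_def add_divide_distrib)
  qed
next
  case (Suc m)
  have base: "Gw (E (Suc m)) = real (Suc m)"
    using Suc.IH[of "L m"] E_Suc[of m] L_ge1[of m] by simp
  show ?case using Suc.prems
  proof (induction t)
    case 0 then show ?case using base by simp
  next
    case (Suc t)
    have "{0<..E (Suc m) + Suc t} = insert (E (Suc m) + Suc t) {0<..E (Suc m) + t}" by auto
    then have "Gw (E (Suc m) + Suc t) = Gw (E (Suc m) + t) + Y (E (Suc m) + Suc t)"
      unfolding Gw_def by simp
    moreover have "seg (E (Suc m) + Suc t) = Suc m" using Suc.prems E_Suc[of "Suc m"] by (intro seg_eq) auto
    ultimately show ?case using Suc by (simp add: Y_def add_divide_distrib)
  qed
qed

lemma Phi_eq: assumes "0 \<le> th" "th < 1" shows "Phi (real m + th) = Psi m th"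
proof -
  have "\<lfloor>real m + th\<rfloor> = int m" using assms by (simp add: floor_eq_iff)
  then show ?thesis unfolding Phi_def by simp
qed

lemma Phi_Gw: "Phi (Gw i) = real i"
proof -
  define m where "m = seg (Suc i)"
  have ex: "\<exists>m. E m \<le> i \<and> i < E (Suc m)"
  proof -
    have "\<exists>m. i < E m"
    proof
      have "Suc i \<le> E (Suc i)" using E_add(1) E1 
      proof (induction i)
        case 0 then show ?case using E1 by simp
      next
        case (Suc i) then show ?case using E_add(1)[of "Suc i" 1] E1 by simp
      qed
      then show "i < E (Suc i)" by simp
    qed
    then obtain M where M: "i < E M" by blast
    define m0 where "m0 = (LEAST m. i < E m)"
    have m0: "i < E m0" using M m0_def by (metis LeastI)
    have "m0 \<noteq> 0"
    proof
      assume "m0 = 0" then show False using m0 E0 by simp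
    qed
    then obtain m where mm: "m0 = Suc m" by (cases m0) auto
    have "\<not> i < E m" using mm m0_def by (metis Least_le lessI not_le)
    then show ?thesis using m0 mm not_less by blast
  qed
  then obtain m where m: "E m \<le> i" "i < E (Suc m)" by blast
  define t where "t = i - E m"
  have t: "t < L m" "i = E m + t" using m E_Suc[of m] t_def by auto
  have "Gw i = real m + real t / real (L m)" using Gw_E[of t m] t by simp
  moreover have "0 \<le> real t / real (L m)" by simp
  moreover have "real t / real (L m) < 1" using t(1) L_ge1[of m] by simp
  ultimately have "Phi (Gw i) = Psi m (real t / real (L m))" using Phi_eq by simp
  also have "\<dots> = real i" unfolding Psi_def using t L_ge1[of m] by simp
  finally show ?thesis .
qed


lemma Psi_alt: "Psi m th = (1 - th) * real (E m) + th * real (E (Suc m))"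
  unfolding Psi_def using E_Suc[of m] by (simp add: algebra_simps)

lemma decomp: assumes "0 \<le> x" obtains m th where "x = real m + th" "0 \<le> th" "th < 1"
proof -
  have "x = real (nat \<lfloor>x\<rfloor>) + (x - of_int \<lfloor>x\<rfloor>)" using assms by simp
  moreover have "0 \<le> x - of_int \<lfloor>x\<rfloor>" "x - of_int \<lfloor>x\<rfloor> < 1" by linarith+
  ultimately show ?thesis using that by blast
qed

lemma E_add_real: "real (E a) + real (E b) \<le> real (E (a+b))" "real (E (a+b)) \<le> real (E a) + real (E b) + 1"
  using E_add[of a b] by linarith+

lemma Phi_add:
  assumes "0 \<le> x" "0 \<le> y"
  shows "Phi x + Phi y \<le> Phi (x + y)" "Phi (x + y) \<le> Phi x + Phi y + 1"
proof -
  obtain m1 th1 where x: "x = real m1 + th1" "0 \<le> th1" "th1 < 1" using decomp[OF assms(1)] by blast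
  obtain m2 th2 where y: "y = real m2 + th2" "0 \<le> th2" "th2 < 1" using decomp[OF assms(2)] by blast
  have px: "Phi x = (1 - th1) * real (E m1) + th1 * real (E (Suc m1))" using x Phi_eq Psi_alt by simp
  have py: "Phi y = (1 - th2) * real (E m2) + th2 * real (E (Suc m2))" using y Phi_eq Psi_alt by simp
  define M where "M = m1 + m2"
  have "Phi x + Phi y \<le> Phi (x + y) \<and> Phi (x + y) \<le> Phi x + Phi y + 1"
  proof (cases "th1 + th2 < 1")
    case True
    have xy: "x + y = real M + (th1 + th2)" using x y M_def by simp
    have "Phi (x + y) = Psi M (th1 + th2)" unfolding xy using True x y by (intro Phi_eq) auto
    then have pxy: "Phi (x + y) = (1 - (th1 + th2)) * real (E M) + (th1 + th2) * real (E (Suc M))"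
      using Psi_alt by simp
    define al where "al = 1 - th1 - th2"
    have eq1: "Phi x + Phi y = al * (real (E m1) + real (E m2)) + th1 * (real (E (Suc m1)) + real (E m2))
       + th2 * (real (E m1) + real (E (Suc m2)))" unfolding px py al_def by (simp add: algebra_simps)
    have eq2: "Phi (x + y) = al * real (E M) + th1 * real (E (Suc M)) + th2 * real (E (Suc M))"
      unfolding pxy al_def by (simp add: algebra_simps)
    have i1: "real (E m1) + real (E m2) \<le> real (E M)" "real (E M) \<le> real (E m1) + real (E m2) + 1"
      using E_add_real[of m1 m2] M_def by auto
    have i2: "real (E (Suc m1)) + real (E m2) \<le> real (E (Suc M))" "real (E (Suc M)) \<le> real (E (Suc m1)) + real (E m2) + 1"
      using E_add_real[of "Suc m1" m2] M_def by auto
    have i3: "real (E m1) + real (E (Suc m2)) \<le> real (E (Suc M))" "real (E (Suc M)) \<le> real (E m1) + real (E (Suc m2)) + 1"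
      using E_add_real[of m1 "Suc m2"] M_def by auto
    have "0 \<le> al" "al + th1 + th2 = 1" using True al_def by auto
    note c = convex3[OF this(1) x(2) y(2) this(2) i1 i2 i3]
    show ?thesis unfolding eq1 eq2 using c by simp
  next
    case False
    have xy: "x + y = real (Suc M) + (th1 + th2 - 1)" using x y M_def by simp
    have "Phi (x + y) = Psi (Suc M) (th1 + th2 - 1)" unfolding xy using False x y by (intro Phi_eq) auto
    then have pxy: "Phi (x + y) = (1 - (th1 + th2 - 1)) * real (E (Suc M)) + (th1 + th2 - 1) * real (E (Suc (Suc M)))"
      using Psi_alt by simp
    define ga where "ga = th1 + th2 - 1"
    have eq1: "Phi x + Phi y = (1 - th1) * (real (E m1) + real (E (Suc m2))) + (1 - th2) * (real (E (Suc m1)) + real (E m2))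
       + ga * (real (E (Suc m1)) + real (E (Suc m2)))" unfolding px py ga_def by (simp add: algebra_simps)
    have eq2: "Phi (x + y) = (1 - th1) * real (E (Suc M)) + (1 - th2) * real (E (Suc M)) + ga * real (E (Suc (Suc M)))"
      unfolding pxy ga_def by (simp add: algebra_simps)
    have i1: "real (E m1) + real (E (Suc m2)) \<le> real (E (Suc M))" "real (E (Suc M)) \<le> real (E m1) + real (E (Suc m2)) + 1"
      using E_add_real[of m1 "Suc m2"] M_def by auto
    have i2: "real (E (Suc m1)) + real (E m2) \<le> real (E (Suc M))" "real (E (Suc M)) \<le> real (E (Suc m1)) + real (E m2) + 1"
      using E_add_real[of "Suc m1" m2] M_def by auto
    have i3: "real (E (Suc m1)) + real (E (Suc m2)) \<le> real (E (Suc (Suc M)))" "real (E (Suc (Suc M))) \<le> real (E (Suc m1)) + real (E (Suc m2)) + 1"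
      using E_add_real[of "Suc m1" "Suc m2"] M_def by auto
    have "0 \<le> 1 - th1" "0 \<le> 1 - th2" "0 \<le> ga" "(1 - th1) + (1 - th2) + ga = 1" using False ga_def x y by auto
    note c = convex3[OF this i1 i2 i3]
    show ?thesis unfolding eq1 eq2 using c by simp
  qed
  then show "Phi x + Phi y \<le> Phi (x + y)" "Phi (x + y) \<le> Phi x + Phi y + 1" by auto
qed

lemma Phi_strict: assumes "0 \<le> x" "x < y" shows "Phi x < Phi y"
proof -
  have y0: "0 \<le> y" using assms by linarith
  obtain m1 th1 where x: "x = real m1 + th1" "0 \<le> th1" "th1 < 1" using decomp[OF assms(1)] by blast
  obtain m2 th2 where y: "y = real m2 + th2" "0 \<le> th2" "th2 < 1" using decomp[OF y0] by blast
  have "Phi x = Psi m1 th1" unfolding x(1) by (rule Phi_eq[OF x(2) x(3)])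
  then have px: "Phi x = real (E m1) + th1 * real (L m1)" unfolding Psi_def .
  have "Phi y = Psi m2 th2" unfolding y(1) by (rule Phi_eq[OF y(2) y(3)])
  then have py: "Phi y = real (E m2) + th2 * real (L m2)" unfolding Psi_def .
  have L1: "1 \<le> real (L m1)" using L_ge1 by simp
  show ?thesis
  proof (cases "m1 = m2")
    case True
    then have "th1 < th2" using x y assms by simp
    then have "th1 * real (L m1) < th2 * real (L m1)" using L1 by simp
    then show ?thesis using px py True by simp
  next
    case False
    have "real m1 < real m2 + 1" using x y assms by linarith
    then have "m1 \<le> m2" by simp
    then have "m1 < m2" using False by simp
    then have "E (Suc m1) \<le> E m2" using E_mono by simp
    moreover have "th1 * real (L m1) < real (L m1)" using x L1 by simp
    moreover have "0 \<le> th2 * real (L m2)" using y by simp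
    ultimately show ?thesis using px py E_Suc[of m1] by simp
  qed
qed

lemma Gw_nonneg: "0 \<le> Gw i" unfolding Gw_def Y_def by (simp add: sum_nonneg)

lemma Gw_sub: "Gw (a + l) \<le> Gw a + Gw l"
proof (rule ccontr)
  assume "\<not> ?thesis"
  then have "Gw a + Gw l < Gw (a + l)" by simp
  then have "Phi (Gw a + Gw l) < Phi (Gw (a + l))" using Phi_strict Gw_nonneg by (simp add: add_nonneg_nonneg)
  moreover have "Phi (Gw a) + Phi (Gw l) \<le> Phi (Gw a + Gw l)" using Phi_add Gw_nonneg by blast
  ultimately show False using Phi_Gw by simp
qed

lemma Gw_SG: "Gw l1 + Gw l2 \<le> Gw (l1 + l2 + 1)"
proof (rule ccontr)
  assume "\<not> ?thesis"
  then have "Gw (l1 + l2 + 1) < Gw l1 + Gw l2" by simp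
  then have "Phi (Gw (l1 + l2 + 1)) < Phi (Gw l1 + Gw l2)" using Phi_strict Gw_nonneg by blast
  moreover have "Phi (Gw l1 + Gw l2) \<le> Phi (Gw l1) + Phi (Gw l2) + 1" using Phi_add Gw_nonneg by blast
  ultimately show False using Phi_Gw by simp
qed

lemma window: "(\<Sum>u\<in>{a<..a+l}. Y u) \<le> Gw l"
proof -
  have "{0<..a+l} = {0<..a} \<union> {a<..a+l}" by auto
  moreover have "{0<..a} \<inter> {a<..a+l} = {}" by auto
  ultimately have "Gw (a + l) = Gw a + (\<Sum>u\<in>{a<..a+l}. Y u)" unfolding Gw_def
    by (simp add: sum.union_disjoint)
  then show ?thesis using Gw_sub[of a l] by simp
qed

lemma Y_nonneg: "0 \<le> Y u" unfolding Y_def by simp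

lemma Gw_q: "Gw q = real p"
proof -
  have "E p = q" unfolding E_def using p0 by simp
  then show ?thesis using Gw_E[of 0 p] by simp
qed

end

lemma div_Suc_cases: "0 < d \<Longrightarrow> Suc x div d = x div d + (if d dvd Suc x then 1 else 0)"
  by (simp add: div_Suc dvd_eq_mod_eq_0)

lemma nc_window_eq:
  assumes d: "0 < d"
  shows "(\<Sum>u\<in>{a<..a+l}. (if d dvd u then 0 else 1::real)) = real l - (real ((a+l) div d) - real (a div d))"
proof (induction l)
  case 0 then show ?case by simp
next
  case (Suc l)
  have s: "{a<..a + Suc l} = insert (Suc (a + l)) {a<..a+l}" by auto
  have "(\<Sum>u\<in>{a<..a+Suc l}. (if d dvd u then 0 else 1::real)) =
        (if d dvd Suc (a+l) then 0 else 1) + (\<Sum>u\<in>{a<..a+l}. (if d dvd u then 0 else 1::real))"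
    unfolding s by simp
  also have "\<dots> = real (Suc l) - (real ((a + Suc l) div d) - real (a div d))"
    using Suc div_Suc_cases[OF d, of "a + l"] by auto
  finally show ?case .
qed

lemma nc_window:
  assumes d: "0 < d"
  shows "(\<Sum>u\<in>{a<..a+l}. (if d dvd u then 0 else 1::real)) \<le> real l - real (l div d)"
proof -
  have "(a + l) div d = a div d + l div d + (a mod d + l mod d) div d" by (rule div_add1_eq)
  then have "a div d + l div d \<le> (a + l) div d" by linarith
  then show ?thesis unfolding nc_window_eq[OF d] by linarith
qed

lemma nc_SG:
  assumes d: "0 < d"
  shows "(real l1 - real (l1 div d)) + (real l2 - real (l2 div d)) \<le> real (l1 + l2 + 1) - real ((l1 + l2 + 1) div d)"
proof -
  have e: "(l1 + (l2 + 1)) div d = l1 div d + (l2 + 1) div d + (l1 mod d + (l2 + 1) mod d) div d"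
    by (rule div_add1_eq)
  have f: "(l2 + 1) div d = l2 div d + (if d dvd Suc l2 then 1 else 0)" using div_Suc_cases[OF d, of l2] by simp
  have m1: "l1 mod d < d" using d by simp
  have m2: "(l2 + 1) mod d < d" using d by simp
  have g: "(l1 mod d + (l2 + 1) mod d) div d \<le> 1"
  proof -
    have "l1 mod d + (l2 + 1) mod d < 2 * d" using m1 m2 by linarith
    then have "(l1 mod d + (l2 + 1) mod d) div d < 2" using d by (simp add: div_less_iff_less_mult mult.commute)
    then show ?thesis by simp
  qed
  have h: "d dvd Suc l2 \<Longrightarrow> (l2 + 1) mod d = 0" by (simp add: dvd_eq_mod_eq_0)
  have "(l1 mod d + (l2 + 1) mod d) div d = 0" if "d dvd Suc l2"
    using h[OF that] m1 by simp
  then have "(l1 + l2 + 1) div d \<le> l1 div d + l2 div d + 1"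
    using e f g by (cases "d dvd Suc l2") (simp_all add: add.assoc)
  moreover have "l1 div d \<le> l1" "l2 div d \<le> l2" "(l1 + l2 + 1) div d \<le> l1 + l2 + 1" by simp_all
  ultimately show ?thesis by linarith
qed

lemma ycp_formula:
  fixes n c h w :: nat
  assumes h0: "0 < h" and hc: "h \<le> c" and eq: "h * (n - 1) = w * c + 1" and w0: "0 < w"
    and wn: "w \<le> n" and n3: "3 \<le> n"
  shows "y_cp n c h w i = (if 1 \<le> i \<and> i \<le> n - 2 then segs.Y h c i / real w else 0)"
proof -
  interpret segs h c using h0 hc by unfold_locales
  have c0: "0 < c" using h0 hc by simp
  define st where "st j = ((\<lambda>i. if 1 \<le> i \<and> i \<le> E j then Y i / real w else 0), E j + 1)" for j
  have Ew: "E w = n - 2"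
  proof -
    have "h * (n - 1) = h * (n - 2) + h" using n3 by (cases n) (auto simp: algebra_simps)
    then have A: "w * c = (h - 1) + (n - 2) * h" using eq h0 by (simp add: mult.commute)
    have "((h - 1) + (n - 2) * h) div h = (n - 2) + (h - 1) div h" by (rule div_mult_self1) (use h0 in simp)
    moreover have "(h - 1) div h = 0" using h0 by simp
    ultimately have "w * c div h = n - 2" using A by simp
    then show ?thesis unfolding E_def .
  qed
  have Elt: "E j + 1 \<le> n - 2" if "j < w" for j
  proof -
    have "(w - 1) * c + c + 1 = h * (n - 1)" using eq w0 by (cases w) (auto simp: algebra_simps)
    moreover have "h * (n - 1) = h * (n - 2) + h" using n3 by (cases n) (auto simp: algebra_simps)
    ultimately have "(w - 1) * c < (n - 2) * h" using hc by (simp add: mult.commute)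
    then have "(w - 1) * c div h < n - 2" using h0 by (simp add: div_less_iff_less_mult)
    moreover have "E j \<le> E (w - 1)" using that by (intro E_mono) simp
    ultimately show ?thesis unfolding E_def by simp
  qed
  have r: "nat \<lfloor>real c / real h\<rfloor> = c div h" by (simp add: floor_divide_of_nat_eq)
  have E1r: "E 1 = c div h" unfolding E_def by simp
  have Lr: "L j = c div h \<or> L j = c div h + 1" for j
    using E_add[of j 1] E_Suc[of j] E1r by auto
  have step: "cp_step n c h w (st j) = st (Suc j)" if jw: "j < w" for j
  proof -
    define y where "y = fst (st j)"
    have stj: "st j = (y, E j + 1)" unfolding y_def st_def by simp
    have nv: "\<not> E j + 1 > n - 2" using Elt[OF jw] by simp
    have S: "(\<Sum>i\<in>{1..<E j + 1}. y i) = real j / real w"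
    proof -
      have "(\<Sum>i\<in>{1..<E j + 1}. y i) = (\<Sum>i\<in>{0<..E j}. Y i / real w)"
        unfolding y_def st_def by (intro sum.cong) auto
      also have "\<dots> = Gw (E j) / real w" unfolding Gw_def by (simp add: sum_divide_distrib)
      also have "\<dots> = real j / real w" using Gw_E[of 0 j] by simp
      finally show ?thesis .
    qed
    define rr where "rr = c div h"
    have cond: "(real (E j + 1 + (rr + 1) - 1) * (real h / (real w * real c)) \<le> real j / real w + 1 / real w)
       \<longleftrightarrow> L j = rr + 1"
    proof -
      have pos: "0 < real w * real c" using w0 c0 by simp
      have a: "real (E j + 1 + (rr + 1) - 1) * (real h / (real w * real c)) = real ((E j + 1 + rr) * h) / (real w * real c)"
        by (simp add: algebra_simps add_divide_distrib)
      have b: "real j / real w + 1 / real w = real ((j + 1) * c) / (real w * real c)"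
        using w0 c0 by (simp add: field_simps)
      have "(real ((E j + 1 + rr) * h) / (real w * real c) \<le> real ((j + 1) * c) / (real w * real c))
          \<longleftrightarrow> real ((E j + 1 + rr) * h) \<le> real ((j + 1) * c)"
        using pos by (simp only: divide_le_cancel) auto
      also have "\<dots> \<longleftrightarrow> (E j + 1 + rr) * h \<le> (j + 1) * c" by (rule of_nat_le_iff)
      also have "\<dots> \<longleftrightarrow> E j + 1 + rr \<le> E (Suc j)"
        unfolding E_def using h0 by (simp add: less_eq_div_iff_mult_less_eq)
      also have "\<dots> \<longleftrightarrow> L j = rr + 1" using E_Suc[of j] Lr[of j] rr_def by auto
      finally have chain: "(real ((E j + 1 + rr) * h) / (real w * real c) \<le> real ((j + 1) * c) / (real w * real c))
          \<longleftrightarrow> L j = rr + 1" .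
      show ?thesis by (simp only: a b chain)
    qed
    have rs: "(if real (E j + 1 + (c div h + 1) - 1) * (real h / (real w * real c)) \<le> real j / real w + 1 / real w
              then c div h + 1 else c div h) = L j"
      using cond Lr[of j] rr_def by auto
    have unf: "cp_step n c h w (y, E j + 1) =
      ((\<lambda>i. if E j + 1 \<le> i \<and> i < E j + 1 + L j then 1 / (real (L j) * real w) else y i), E j + 1 + L j)"
      by (simp only: cp_step_def prod.case if_not_P[OF nv] Let_def S r rs)
    have f: "(\<lambda>i. if E j + 1 \<le> i \<and> i < E j + 1 + L j then 1 / (real (L j) * real w) else y i) = fst (st (Suc j))"
    proof
      fix i
      show "(if E j + 1 \<le> i \<and> i < E j + 1 + L j then 1 / (real (L j) * real w) else y i) = fst (st (Suc j)) i"
      proof (cases "E j + 1 \<le> i \<and> i < E j + 1 + L j")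
        case True
        then have "seg i = j" using E_Suc[of j] by (intro seg_eq) auto
        then show ?thesis using True E_Suc[of j] unfolding st_def Y_def by auto
      next
        case False
        then show ?thesis unfolding y_def st_def using E_Suc[of j] by auto
      qed
    qed
    show ?thesis unfolding stj unf using f E_Suc[of j] unfolding st_def by simp
  qed
  have iter: "(cp_step n c h w ^^ j) (st 0) = st j" if "j \<le> w" for j
    using that by (induction j) (auto simp: step)
  have fixw: "cp_step n c h w (st w) = st w"
    unfolding st_def cp_step_def using Ew n3 by simp
  have iter2: "(cp_step n c h w ^^ t) (st w) = st w" for t
    by (induction t) (auto simp: fixw)
  have st0: "st 0 = ((\<lambda>_. 0), 1)" unfolding st_def using E0 by (auto intro!: ext)
  have "(cp_step n c h w ^^ n) (\<lambda>_. 0, 1) = st w"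
  proof -
    have "n = (n - w) + w" using wn by simp
    then have "(cp_step n c h w ^^ n) = (cp_step n c h w ^^ (n - w)) \<circ> (cp_step n c h w ^^ w)"
      by (metis funpow_add)
    then show ?thesis using iter[of w] iter2 st0 by simp
  qed
  then have "y_cp n c h w = fst (st w)" unfolding y_cp_def by simp
  then show ?thesis unfolding st_def Ew by simp
qed


lemma E_w_eq:
  fixes n c h w :: nat
  assumes h0: "0 < h" and eq: "h * (n - 1) = w * c + 1" and n3: "3 \<le> n"
  shows "w * c div h = n - 2"
proof -
  have "h * (n - 1) = h * (n - 2) + h" using n3 by (cases n) (auto simp: algebra_simps)
  then have A: "w * c = (h - 1) + (n - 2) * h" using eq h0 by (simp add: mult.commute)
  have "((h - 1) + (n - 2) * h) div h = (n - 2) + (h - 1) div h" by (rule div_mult_self1) (use h0 in simp)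
  moreover have "(h - 1) div h = 0" using h0 by simp
  ultimately show "w * c div h = n - 2" using A by simp
qed

lemma ycp_sum:
  fixes n c h w :: nat
  assumes h0: "0 < h" and hc: "h \<le> c" and eq: "h * (n - 1) = w * c + 1" and w0: "0 < w"
    and wn: "w \<le> n" and n3: "3 \<le> n"
  shows "(\<Sum>v<n. y_cp n c h w v) = 1"
proof -
  interpret segs h c using h0 hc by unfold_locales
  have "(\<Sum>v<n. y_cp n c h w v) = (\<Sum>v<n. if v \<in> {0<..n-2} then Y v / real w else 0)"
    using ycp_formula[OF assms] by (intro sum.cong) auto
  also have "\<dots> = (\<Sum>v\<in>{..<n} \<inter> {0<..n-2}. Y v / real w)"
    by (rule sum.inter_restrict[symmetric]) simp
  also have "{..<n} \<inter> {0<..n-2} = {0<..n-2}" by auto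
  also have "(\<Sum>v\<in>{0<..n-2}. Y v / real w) = Gw (n - 2) / real w"
    unfolding Gw_def by (simp add: sum_divide_distrib)
  also have "n - 2 = E w + 0" unfolding E_def using E_w_eq[OF h0 eq n3] by simp
  also have "Gw (E w + 0) = real w" using Gw_E[of 0 w] by simp
  finally show ?thesis using w0 by simp
qed

lemma intv_start:
  assumes "v < n" "v' < n" "1 \<le> l" "l < n" "l' < n" "intv v l n = intv v' l' n"
  shows "v = v'"
proof -
  have "v \<in> intv v l n" unfolding intv_def using assms by force
  then have "v \<in> intv v' l' n" using assms by simp
  then obtain z where z: "v' \<le> z" "z < v' + l'" "v = z mod n" unfolding intv_def by auto
  show ?thesis
  proof (cases "z = v'")
    case True then show ?thesis using z assms by simp
  next
    case False
    then have "(z - 1) mod n \<in> intv v' l' n" unfolding intv_def using z by force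
    then have "(z - 1) mod n \<in> intv v l n" using assms by simp
    then obtain z2 where z2: "v \<le> z2" "z2 < v + l" "(z - 1) mod n = z2 mod n" unfolding intv_def by auto
    have z1: "1 \<le> z" using False z by simp
    have "(z2 + 1) mod n = (z2 mod n + 1) mod n" by (rule mod_add_left_eq[symmetric])
    also have "\<dots> = ((z - 1) mod n + 1) mod n" using z2 by simp
    also have "\<dots> = (z - 1 + 1) mod n" by (rule mod_add_left_eq)
    also have "\<dots> = v mod n" using z1 z assms by simp
    finally have "(z2 + 1) mod n = v mod n" .
    then have "n dvd z2 + 1 - v" using mod_eq_dvd_iff_nat[of v "z2 + 1" n] z2 by simp
    moreover have "0 < z2 + 1 - v" "z2 + 1 - v < n" using z2 assms by auto
    ultimately show ?thesis using dvd_imp_le by fastforce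
  qed
qed

lemma ct_intv: "\<exists>l. (l = c \<or> l = c + 1) \<and> cover_target n c v = intv v l n"
  unfolding cover_target_def by auto

locale gctx =
  fixes n c h w k :: nat and Tv :: "nat \<Rightarrow> strat"
  assumes c2: "2 \<le> c" and cn: "c + 3 \<le> n" and h0: "0 < h" and w0: "0 < w" and wn: "w \<le> n - 2"
    and eqn: "h * (n - 1) = w * c + (if gcd c (n - 1) = 1 then 1 else 0)"
    and minw: "\<And>h' w'. 0 < h' \<Longrightarrow> 0 < w' \<Longrightarrow> w' < w \<Longrightarrow> h' * (n - 1) \<noteq> w' * c + (if gcd c (n - 1) = 1 then 1 else 0)"
    and TvP: "\<And>v. v < n \<Longrightarrow> v \<noteq> 1 \<Longrightarrow> Tv v \<in> strategies n k \<and> C n (Tv v) = cover_target n c v"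
begin

abbreviation "N \<equiv> n - 1"
abbreviation "cp \<equiv> gcd c (n - 1) = 1"

lemma N_gt: "c + 2 \<le> N" using cn by simp

lemma no_dvd_wc: assumes "0 < w'" "w' < w" shows "\<not> N dvd w' * c"
proof
  assume dv: "N dvd w' * c"
  show False
  proof (cases cp)
    case True
    then have "coprime N c" by (simp add: coprime_iff_gcd_eq_1 gcd.commute)
    then have "N dvd w'" using dv by (simp add: coprime_dvd_mult_left_iff)
    then have "N \<le> w'" using assms by (simp add: dvd_imp_le)
    then show False using assms wn by simp
  next
    case False
    obtain h' where hh: "w' * c = N * h'" using dv by (auto elim: dvdE)
    have "0 < h'" using hh assms c2 by (cases h') auto
    then show False using minw[of h' w'] assms False hh by (simp add: mult.commute)
  qed
qed

lemma no_dvd_1wc: assumes "0 < j" "j < w" shows "\<not> N dvd 1 + j * c"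
proof
  assume dv: "N dvd 1 + j * c"
  obtain h' where hh: "1 + j * c = N * h'" using dv by (auto elim: dvdE)
  have "0 < h'" using hh by (cases h') auto
  show False
  proof (cases cp)
    case True
    then show False using minw[of h' j] assms \<open>0 < h'\<close> hh by (simp add: mult.commute)
  next
    case False
    have "gcd c N dvd N" "gcd c N dvd c" by simp_all
    then have "gcd c N dvd 1 + j * c" using dv by (meson dvd_trans)
    then have x: "gcd c N dvd j * c + 1" by (simp add: add.commute)
    have y: "gcd c N dvd j * c" using \<open>gcd c N dvd c\<close> by simp
    have "gcd c N dvd 1" using x dvd_add_right_iff[OF y, of 1] by blast
    then show False using False by simp
  qed
qed

definition nu :: "nat \<Rightarrow> nat" where "nu j = (if j = 0 then 0 else (1 + j * c) mod N)"

lemma gv: "greedy_v n c j = (1 + (j + 1) * c) mod N"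
proof (induction j)
  case 0
  have "c + 1 < N" using N_gt by simp
  then show ?case unfolding greedy_v_def by simp
next
  case (Suc j)
  have "greedy_v n c (Suc j) = (greedy_v n c j + c) mod N" unfolding greedy_v_def by simp
  also have "\<dots> = ((1 + (j + 1) * c) mod N + c) mod N" using Suc by simp
  also have "\<dots> = (1 + (j + 1) * c + c) mod N" by (simp add: mod_add_left_eq)
  also have "1 + (j + 1) * c + c = 1 + (Suc j + 1) * c" by simp
  finally show ?case .
qed

lemma nu_not01: assumes "0 < j" "j < w" shows "nu j \<noteq> 0" "nu j \<noteq> 1"
proof -
  show "nu j \<noteq> 0" using no_dvd_1wc[OF assms] assms unfolding nu_def by (simp add: dvd_eq_mod_eq_0)
  show "nu j \<noteq> 1"
  proof
    assume "nu j = 1"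
    then have "(1 + j * c) mod N = 1 mod N" using N_gt assms unfolding nu_def by simp
    then have "N dvd (1 + j * c) - 1" using mod_eq_dvd_iff_nat[of 1 "1 + j * c" N] by simp
    then show False using no_dvd_wc[OF assms] by simp
  qed
qed

lemma wc_stop: "(1 + w * c) mod N \<in> {0, 1}"
proof (cases cp)
  case True
  then have "1 + w * c = N * h" using eqn by (simp add: mult.commute)
  then show ?thesis by simp
next
  case False
  then have "w * c = h * N" using eqn by (simp add: mult.commute)
  then have "(1 + w * c) mod N = (1 + h * N) mod N" by simp
  also have "\<dots> = 1 mod N" by (rule mod_mult_self1)
  finally show ?thesis using N_gt by simp
qed

lemma stop: "greedy_stop n c = w - 1"
proof -
  have a: "greedy_v n c (w - 1) \<in> {0, 1}" using gv[of "w - 1"] wc_stop w0 by simp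
  have b: "\<And>j. j < w - 1 \<Longrightarrow> greedy_v n c j \<notin> {0, 1}"
  proof -
    fix j assume "j < w - 1"
    then have "greedy_v n c j = nu (j + 1)" "0 < j + 1" "j + 1 < w" using gv[of j] unfolding nu_def by auto
    then show "greedy_v n c j \<notin> {0, 1}" using nu_not01 by auto
  qed
  show ?thesis unfolding greedy_stop_def
  proof (rule Least_equality)
    show "greedy_v n c (w - 1) \<in> {0, 1}" by (rule a)
    fix y assume "greedy_v n c y \<in> {0, 1}"
    then show "w - 1 \<le> y" using b not_less by blast
  qed
qed


lemma nu_lt: "nu j < n"
proof -
  have "(1 + j * c) mod N < N" using N_gt by simp
  moreover have "N < n" using N_gt by simp
  ultimately have "(1 + j * c) mod N < n" by linarith
  moreover have "0 < n" using N_gt by simp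
  ultimately show ?thesis unfolding nu_def by simp
qed

lemma nu_ne1: "j < w \<Longrightarrow> nu j \<noteq> 1"
  using nu_not01[of j] unfolding nu_def by (cases "j = 0") auto

lemma nu_inj: "inj_on nu {..<w}"
proof -
  have *: "nu j \<noteq> nu j'" if "j < j'" "j' < w" for j j'
  proof (cases "j = 0")
    case True
    then show ?thesis using nu_not01[of j'] that unfolding nu_def by auto
  next
    case False
    show ?thesis
    proof
      assume "nu j = nu j'"
      then have "(1 + j' * c) mod N = (1 + j * c) mod N" using False that unfolding nu_def by auto
      then have "N dvd (1 + j' * c) - (1 + j * c)" using mod_eq_dvd_iff_nat[of "1 + j * c" "1 + j' * c" N] that by simp
      moreover have "(1 + j' * c) - (1 + j * c) = (j' - j) * c" by (simp add: diff_mult_distrib)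
      ultimately show False using no_dvd_wc[of "j' - j"] that by simp
    qed
  qed
  show ?thesis unfolding inj_on_def
  proof (intro ballI impI)
    fix x y assume "x \<in> {..<w}" "y \<in> {..<w}" "nu x = nu y"
    then show "x = y" using *[of x y] *[of y x] by (cases "x < y"; cases "y < x") auto
  qed
qed

lemma ct_inj: assumes "a < n" "b < n" "cover_target n c a = cover_target n c b" shows "a = b"
proof -
  obtain l where l: "l = c \<or> l = c + 1" "cover_target n c a = intv a l n" using ct_intv by blast
  obtain l' where l': "l' = c \<or> l' = c + 1" "cover_target n c b = intv b l' n" using ct_intv by blast
  show ?thesis using intv_start[of a n b l l'] assms l l' cn c2 by auto
qed

lemma Tv_inj: "inj_on Tv (nu ` {..<w})"
  unfolding inj_on_def
proof (intro ballI impI)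
  fix a b assume a: "a \<in> nu ` {..<w}" and b: "b \<in> nu ` {..<w}" and e: "Tv a = Tv b"
  have "a < n" "a \<noteq> 1" "b < n" "b \<noteq> 1" using a b nu_lt nu_ne1 by auto
  then have "cover_target n c a = cover_target n c b" using TvP e by metis
  then show "a = b" using ct_inj \<open>a < n\<close> \<open>b < n\<close> by blast
qed

definition X :: "strat set" where "X = Tv ` nu ` {..<w}"

lemma greedy_set_eq: "greedy_set n c Tv = X"
proof -
  have "greedy_set n c Tv = insert (Tv 0) {Tv (nu (j + 1)) | j. j < w - 1}"
    unfolding greedy_set_def stop using gv unfolding nu_def by simp
  also have "\<dots> = X" unfolding X_def
  proof (intro equalityI subsetI)
    fix T assume "T \<in> insert (Tv 0) {Tv (nu (j + 1)) | j. j < w - 1}"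
    then show "T \<in> Tv ` nu ` {..<w}"
    proof
      assume "T = Tv 0" then show ?thesis using w0 by (force simp: nu_def)
    next
      assume "T \<in> {Tv (nu (j + 1)) | j. j < w - 1}"
      then obtain j where "T = Tv (nu (j + 1))" "j < w - 1" by auto
      then show ?thesis by force
    qed
  next
    fix T assume "T \<in> Tv ` nu ` {..<w}"
    then obtain j where j: "j < w" "T = Tv (nu j)" by auto
    show "T \<in> insert (Tv 0) {Tv (nu (j + 1)) | j. j < w - 1}"
    proof (cases j)
      case 0 then show ?thesis using j by (simp add: nu_def)
    next
      case (Suc i) then show ?thesis using j by auto
    qed
  qed
  finally show ?thesis .
qed

lemma card_X: "card X = w"
  unfolding X_def using card_image[OF Tv_inj] card_image[OF nu_inj] by simp

lemma X_strat: "X \<subseteq> strategies n k"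
  unfolding X_def using TvP nu_lt nu_ne1 by auto

lemma CX: "j < w \<Longrightarrow> C n (Tv (nu j)) = cover_target n c (nu j)"
  using TvP nu_lt nu_ne1 by auto


lemma mem_intv: "v \<le> z \<Longrightarrow> z < v + l \<Longrightarrow> z mod n \<in> intv v l n"
  unfolding intv_def by auto

lemma ct_mem1: "v \<le> z \<Longrightarrow> z < v + c \<Longrightarrow> z mod n \<in> cover_target n c v"
  unfolding cover_target_def using mem_intv[of v z c] mem_intv[of v z "c + 1"] by auto

lemma ct_big: "v \<le> z0 \<Longrightarrow> z0 \<le> v + c \<Longrightarrow> z0 mod n \<in> {0, n - 1} \<Longrightarrow> cover_target n c v = intv v (c + 1) n"
  unfolding cover_target_def using mem_intv[of v z0 "c + 1"] by auto

lemma ct_mem2: "v \<le> z0 \<Longrightarrow> z0 \<le> v + c \<Longrightarrow> z0 mod n \<in> {0, n - 1} \<Longrightarrow> v \<le> z \<Longrightarrow> z \<le> v + c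
   \<Longrightarrow> z mod n \<in> cover_target n c v"
  using ct_big[of v z0] mem_intv[of v z "c + 1"] by auto

definition blk :: "nat \<Rightarrow> nat" where "blk x = (x - 1) div c"

lemma blk_props: assumes "1 \<le> x" shows "blk x * c < x" "x \<le> (blk x + 1) * c"
proof -
  have e: "x - 1 = blk x * c + (x - 1) mod c" unfolding blk_def by simp
  have "(x - 1) mod c < c" using c2 by simp
  then show "blk x * c < x" "x \<le> (blk x + 1) * c" using e assms by (simp_all add: algebra_simps)
qed

lemma blk_lt: assumes "1 \<le> x" "x \<le> m * c" shows "blk x < m"
proof -
  have "x - 1 < m * c" using assms by simp
  then show ?thesis unfolding blk_def using c2 by (simp add: div_less_iff_less_mult)
qed

lemma blk_ge1: assumes "c + 1 \<le> x" shows "1 \<le> blk x"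
  unfolding blk_def using assms c2 by (simp add: less_eq_div_iff_mult_less_eq)

lemma blk_gap: assumes "1 \<le> x" "x + N \<le> x'" shows "blk x \<noteq> blk x'"
proof
  assume e: "blk x = blk x'"
  have "blk x * c < x" using blk_props assms by simp
  moreover have "x' \<le> (blk x' + 1) * c" using blk_props assms by simp
  ultimately have "x' < x + c" using e by (simp add: algebra_simps)
  then show False using assms N_gt by simp
qed

lemma cov_a:
  assumes j: "j < w" and x: "j * c < x" "x \<le> (j + 1) * c" and u: "1 \<le> u" "u \<le> n - 2" and xu: "x mod N = u"
  shows "u \<in> cover_target n c (nu j)"
proof (cases "j = 0")
  case True
  then have "x \<le> c" using x by simp
  then have "x mod N = x" using N_gt by simp
  then have ux: "u = x" using xu by simp
  have "u mod n \<in> cover_target n c 0" using ct_mem2[of 0 0 u] ux \<open>x \<le> c\<close> by simp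
  then show ?thesis using True ux \<open>x \<le> c\<close> N_gt unfolding nu_def by simp
next
  case False
  define v where "v = nu j"
  have v: "v = (1 + j * c) mod N" using False v_def nu_def by simp
  have vN: "v < N" using v N_gt by simp
  define t where "t = x - (1 + j * c)"
  have xt: "x = (1 + j * c) + t" using x t_def by simp
  have tc: "t < c" using x xt by (simp add: algebra_simps)
  have "x mod N = (v + t) mod N" unfolding xt v by (simp add: mod_add_left_eq)
  then have vt: "(v + t) mod N = u" using xu by simp
  show ?thesis
  proof (cases "v + t < N")
    case True
    then have "u = v + t" using vt by simp
    moreover have "(v + t) mod n = v + t" using True by simp
    ultimately show ?thesis using ct_mem1[of v "v + t"] tc v_def by simp
  next
    case False
    have "v + t < 2 * N" using vN tc N_gt by simp
    have "(v + t) mod N = (v + t - N) mod N" using False by (simp add: le_mod_geq)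
    moreover have "v + t - N < N" using \<open>v + t < 2 * N\<close> by simp
    ultimately have "(v + t) mod N = v + t - N" by simp
    then have uu: "u = v + t - N" using vt by simp
    have nle: "n \<le> v + t + 1" using False N_gt by simp
    have "(v + t + 1) mod n = (v + t + 1 - n) mod n" using nle by (simp add: le_mod_geq)
    moreover have "v + t + 1 - n = u" using uu nle N_gt by simp
    moreover have "u < n" using u N_gt by simp
    ultimately have "(v + t + 1) mod n = u" by simp
    have a3: "n mod n \<in> {0, n - 1}" by simp
    have a1: "v \<le> n" and a2: "n \<le> v + c" and a4: "v \<le> v + t + 1" and a5: "v + t + 1 \<le> v + c"
      using vN nle tc by auto
    have "(v + t + 1) mod n \<in> cover_target n c v" by (rule ct_mem2[OF a1 a2 a3 a4 a5])
    then show ?thesis using \<open>(v + t + 1) mod n = u\<close> v_def by simp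
  qed
qed


lemma cov_b:
  assumes j: "0 < j" "j < w" and x: "j * c < x" "x \<le> (j + 1) * c" and x0: "x mod N = 0"
  shows "0 \<in> cover_target n c (nu j)" "n - 1 \<in> cover_target n c (nu j)"
proof -
  define v where "v = nu j"
  have v: "v = (1 + j * c) mod N" using j v_def nu_def by simp
  have vN: "v < N" using v N_gt by simp
  have v0: "v \<noteq> 0" using nu_not01[OF j] v_def by simp
  define t where "t = x - (1 + j * c)"
  have xt: "x = (1 + j * c) + t" using x t_def by simp
  have tc: "t < c" using x xt by (simp add: algebra_simps)
  have "x mod N = (v + t) mod N" unfolding xt v by (simp add: mod_add_left_eq)
  then have vt: "(v + t) mod N = 0" using x0 by simp
  have "v + t = N"
  proof (rule ccontr)
    assume ne: "v + t \<noteq> N"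
    show False
    proof (cases "v + t < N")
      case True
      then show False using vt v0 by simp
    next
      case False
      then have "N < v + t" using ne by simp
      moreover have "v + t < 2 * N" using vN tc N_gt by simp
      moreover have "(v + t) mod N = (v + t - N) mod N" using False by (simp add: le_mod_geq)
      ultimately show False using vt by simp
    qed
  qed
  have a3: "n mod n \<in> {0, n - 1}" by simp
  have a1: "v \<le> n" and a2: "n \<le> v + c" using vN \<open>v + t = N\<close> tc by auto
  have "(v + t + 1) mod n \<in> cover_target n c v"
    by (rule ct_mem2[OF a1 a2 a3]) (use \<open>v + t = N\<close> tc in auto)
  moreover have "(v + t + 1) mod n = 0" using \<open>v + t = N\<close> N_gt by simp
  ultimately show "0 \<in> cover_target n c (nu j)" using v_def by simp
  have "(v + t) mod n \<in> cover_target n c v"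
    by (rule ct_mem2[OF a1 a2 a3]) (use \<open>v + t = N\<close> tc in auto)
  moreover have "(v + t) mod n = n - 1" using \<open>v + t = N\<close> N_gt by simp
  ultimately show "n - 1 \<in> cover_target n c (nu j)" using v_def by simp
qed

lemma cov_c: "0 \<in> cover_target n c (nu 0)"
  using ct_mem1[of 0 0] c2 unfolding nu_def by simp

lemma w2: "2 \<le> w"
proof (rule ccontr)
  assume "\<not> 2 \<le> w"
  then have "w = 1" using w0 by simp
  then have "h * N \<le> c + 1" using eqn by (simp split: if_splits)
  moreover have "1 * N \<le> h * N" by (rule mult_le_mono1) (use h0 in simp)
  ultimately show False using N_gt by linarith
qed

lemma cov_d: assumes cp shows "n - 1 \<in> cover_target n c (nu (w - 1))"
proof -
  have e: "h * N = w * c + 1" using eqn assms by simp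
  have "1 + (w - 1) * c + c = h * N" using e w2 by (cases w) (auto simp: algebra_simps)
  moreover have "h * N = (h - 1) * N + N" using h0 by (cases h) auto
  moreover have "N - c + c = N" using N_gt by simp
  ultimately have "1 + (w - 1) * c = (h - 1) * N + (N - c)" by linarith
  then have "(1 + (w - 1) * c) mod N = (N - c) mod N" by simp
  also have "\<dots> = N - c" using c2 N_gt by simp
  finally have v: "nu (w - 1) = N - c" unfolding nu_def using w2 by simp
  have a3: "N mod n \<in> {0, n - 1}" using N_gt by simp
  have a1: "N - c \<le> N" and a2: "N \<le> N - c + c" using N_gt by auto
  have "N mod n \<in> cover_target n c (N - c)" by (rule ct_mem2[OF a1 a2 a3 a1 a2])
  then show ?thesis using v N_gt by simp
qed

lemma count_lemma:
  assumes f: "inj_on f {..<h}" "\<And>i. i < h \<Longrightarrow> f i < w \<and> u \<in> cover_target n c (nu (f i))"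
  shows "h \<le> card {j. j < w \<and> u \<in> cover_target n c (nu j)}"
proof -
  have "f ` {..<h} \<subseteq> {j. j < w \<and> u \<in> cover_target n c (nu j)}" using f(2) by auto
  moreover have "finite {j. j < w \<and> u \<in> cover_target n c (nu j)}" by simp
  ultimately have "card (f ` {..<h}) \<le> card {j. j < w \<and> u \<in> cover_target n c (nu j)}" by (rule card_mono[rotated])
  then show ?thesis using card_image[OF f(1)] by simp
qed

lemma mul_gap: fixes M :: nat shows "i < i' \<Longrightarrow> i * M + M \<le> i' * M"
proof -
  assume "i < i'"
  then have "Suc i * M \<le> i' * M" using mult_le_mono1[of "Suc i" i' M] by simp
  then show ?thesis by simp
qed

lemma hN_le: "h * N \<le> w * c + 1" using eqn by (simp split: if_splits)

lemma coverage: assumes "u < n" shows "h \<le> card {j. j < w \<and> u \<in> cover_target n c (nu j)}"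
proof -
  have main_mid: ?thesis if u: "1 \<le> u" "u \<le> n - 2"
  proof (rule count_lemma)
    define f where "f i = blk (u + i * N)" for i
    show "inj_on f {..<h}" unfolding inj_on_def
    proof (intro ballI impI)
      fix i i' assume "i \<in> {..<h}" "i' \<in> {..<h}" "f i = f i'"
      show "i = i'"
      proof (rule ccontr)
        assume "i \<noteq> i'"
        then consider "i < i'" | "i' < i" by linarith
        then show False
        proof cases
          case 1
          then have "u + i * N + N \<le> u + i' * N" using mul_gap[of i i' N] by simp
          then show False using blk_gap[of "u + i * N" "u + i' * N"] u \<open>f i = f i'\<close> f_def by simp
        next
          case 2
          then have "u + i' * N + N \<le> u + i * N" using mul_gap[of i' i N] by simp
          then show False using blk_gap[of "u + i' * N" "u + i * N"] u \<open>f i = f i'\<close> f_def by simp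
        qed
      qed
    qed
    fix i assume i: "i < h"
    define x where "x = u + i * N"
    have x1: "1 \<le> x" using u x_def by simp
    have "i * N + N \<le> h * N" using mul_gap[OF i] .
    then have "x \<le> w * c" using hN_le u N_gt x_def by linarith
    then have fw: "f i < w" using blk_lt[OF x1] x_def f_def by simp
    have xm: "x mod N = u" using u N_gt x_def by simp
    show "f i < w \<and> u \<in> cover_target n c (nu (f i))"
      using fw cov_a[OF fw _ _ u xm] blk_props[OF x1] x_def f_def by (simp add: algebra_simps)
  qed
  have mc: "blk (i * N) < w \<and> 1 \<le> blk (i * N) \<and> 0 \<in> cover_target n c (nu (blk (i * N)))
      \<and> n - 1 \<in> cover_target n c (nu (blk (i * N)))" if i: "1 \<le> i" "i * N \<le> w * c" for i
  proof -
    define x where "x = i * N"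
    have "1 * N \<le> i * N" by (rule mult_le_mono1) (use i in simp)
    then have xN: "N \<le> x" using x_def by simp
    have x1: "1 \<le> x" using xN N_gt by simp
    have b1: "1 \<le> blk x" using blk_ge1 xN N_gt by simp
    have bw: "blk x < w" using blk_lt[OF x1] i x_def by simp
    have xm: "x mod N = 0" using x_def by simp
    have "blk x * c < x" "x \<le> (blk x + 1) * c" using blk_props[OF x1] by auto
    then show ?thesis using cov_b[OF _ bw _ _ xm] b1 bw x_def by auto
  qed
  have mg: "blk (i * N) \<noteq> blk (i' * N)" if "i < i'" "1 \<le> i" for i i'
  proof -
    have "1 \<le> i * N" using that N_gt by simp
    then show ?thesis using blk_gap[of "i * N" "i' * N"] mul_gap[OF that(1), of N] by simp
  qed
  have mg2: "blk (i * N) \<noteq> blk (i' * N)" if "i \<noteq> i'" "1 \<le> i" "1 \<le> i'" for i i'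
    using mg[of i i'] mg[of i' i] that by (cases "i < i'") auto
  have hNle: "i * N \<le> w * c" if "i < h" for i
  proof -
    have "i * N + N \<le> h * N" using mul_gap[OF that] .
    then show ?thesis using hN_le N_gt by linarith
  qed
  have ends: ?thesis if u01: "u = 0 \<or> u = n - 1"
  proof (cases cp)
    case False
    then have hN: "h * N = w * c" using eqn by simp
    show ?thesis
    proof (rule count_lemma)
      define f where "f i = blk ((i + 1) * N)" for i
      show "inj_on f {..<h}" unfolding inj_on_def f_def
      proof (intro ballI impI)
        fix i i' assume "blk ((i + 1) * N) = blk ((i' + 1) * N)"
        then show "i = i'" using mg2[of "i + 1" "i' + 1"] by (cases "i = i'") auto
      qed
      fix i assume i: "i < h"
      have "i * N + N \<le> h * N" using mul_gap[OF i] .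
      then have "(i + 1) * N \<le> w * c" using hN by simp
      then show "f i < w \<and> u \<in> cover_target n c (nu (f i))" using mc[of "i + 1"] u01 f_def by auto
    qed
  next
    case True
    show ?thesis
    proof (cases "u = 0")
      case True
      show ?thesis
      proof (rule count_lemma)
        define f where "f i = (if i = 0 then 0 else blk (i * N))" for i
        show "inj_on f {..<h}" unfolding inj_on_def f_def
        proof (intro ballI impI)
          fix i i' assume "i \<in> {..<h}" "i' \<in> {..<h}" and e: "(if i = 0 then 0 else blk (i * N)) = (if i' = 0 then 0 else blk (i' * N))"
          show "i = i'"
          proof (cases "i = 0"; cases "i' = 0")
            assume "i = 0" "i' \<noteq> 0" then show ?thesis using e mc[of i'] hNle \<open>i' \<in> {..<h}\<close> by auto
          next
            assume "i \<noteq> 0" "i' = 0" then show ?thesis using e mc[of i] hNle \<open>i \<in> {..<h}\<close> by auto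
          next
            assume "i \<noteq> 0" "i' \<noteq> 0" then show ?thesis using e mg2[of i i'] by auto
          qed simp
        qed
        fix i assume i: "i < h"
        show "f i < w \<and> u \<in> cover_target n c (nu (f i))"
          using mc[of i] hNle[OF i] \<open>u = 0\<close> cov_c w0 f_def by (cases "i = 0") auto
      qed
    next
      case False
      then have uN: "u = n - 1" using u01 by simp
      have hNle2: "blk (i * N) < w - 1" if "1 \<le> i" "i < h" for i
      proof -
        have e: "h * N = w * c + 1" using eqn \<open>cp\<close> by simp
        have "i * N + N \<le> h * N" using mul_gap[OF that(2)] .
        moreover have "(w - 1) * c + c = w * c" using w0 by (cases w) auto
        ultimately have "i * N \<le> (w - 1) * c" using e N_gt by linarith
        moreover have "1 \<le> i * N" using that N_gt by simp
        ultimately show ?thesis using blk_lt by simp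
      qed
      show ?thesis
      proof (rule count_lemma)
        define f where "f i = (if i = 0 then w - 1 else blk (i * N))" for i
        show "inj_on f {..<h}" unfolding inj_on_def f_def
        proof (intro ballI impI)
          fix i i' assume "i \<in> {..<h}" "i' \<in> {..<h}" and e: "(if i = 0 then w - 1 else blk (i * N)) = (if i' = 0 then w - 1 else blk (i' * N))"
          show "i = i'"
          proof (cases "i = 0"; cases "i' = 0")
            assume "i = 0" "i' \<noteq> 0" then show ?thesis using e hNle2[of i'] \<open>i' \<in> {..<h}\<close> by auto
          next
            assume "i \<noteq> 0" "i' = 0" then show ?thesis using e hNle2[of i] \<open>i \<in> {..<h}\<close> by auto
          next
            assume "i \<noteq> 0" "i' \<noteq> 0" then show ?thesis using e mg2[of i i'] by auto
          qed simp
        qed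
        fix i assume i: "i < h"
        show "f i < w \<and> u \<in> cover_target n c (nu (f i))"
          using mc[of i] hNle[OF i] uN cov_d[OF \<open>cp\<close>] w0 f_def by (cases "i = 0") auto
      qed
    qed
  qed
  show ?thesis
  proof (cases "1 \<le> u \<and> u \<le> n - 2")
    case True then show ?thesis using main_mid by blast
  next
    case False then show ?thesis using ends assms by (intro ends) linarith
  qed
qed


lemma gx_eq: "greedy_x n c Tv T = (if T \<in> X then 1 / real w else 0)"
  unfolding greedy_x_def greedy_set_eq card_X by simp

lemma finX: "finite X" unfolding X_def by simp

lemma gx_dist: "greedy_x n c Tv \<in> seeker_dists n k"
proof -
  have "(\<Sum>T\<in>strategies n k. greedy_x n c Tv T) = (\<Sum>T\<in>strategies n k \<inter> X. 1 / real w)"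
    unfolding gx_eq by (rule sum.inter_restrict[symmetric, OF finite_strategies])
  also have "strategies n k \<inter> X = X" using X_strat by auto
  also have "(\<Sum>T\<in>X. 1 / real w) = 1" using card_X w0 by simp
  finally show ?thesis unfolding seeker_dists_def gx_eq by simp
qed

lemma inj_comp: "inj_on (Tv \<circ> nu) {..<w}"
  using comp_inj_on[OF nu_inj Tv_inj] .

lemma payoff_ge: assumes "u < n" shows "real h / real w \<le> seeker_payoff n k (greedy_x n c Tv) u"
proof -
  define J where "J = {j. j < w \<and> u \<in> cover_target n c (nu j)}"
  have JX: "{T \<in> X. u \<in> C n T} = (Tv \<circ> nu) ` J"
  proof (intro equalityI subsetI)
    fix T assume "T \<in> {T \<in> X. u \<in> C n T}"
    then obtain j where "j < w" "T = Tv (nu j)" "u \<in> C n T" unfolding X_def by auto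
    then show "T \<in> (Tv \<circ> nu) ` J" unfolding J_def using CX by auto
  next
    fix T assume "T \<in> (Tv \<circ> nu) ` J"
    then obtain j where "j < w" "T = Tv (nu j)" "u \<in> cover_target n c (nu j)" unfolding J_def by auto
    then show "T \<in> {T \<in> X. u \<in> C n T}" unfolding X_def using CX by auto
  qed
  have "J \<subseteq> {..<w}" unfolding J_def by auto
  then have "inj_on (Tv \<circ> nu) J" using inj_comp inj_on_subset by blast
  then have cJ: "card ((Tv \<circ> nu) ` J) = card J" by (rule card_image)
  have fs: "finite {T \<in> strategies n k. u \<in> C n T}" using finite_strategies by simp
  have "seeker_payoff n k (greedy_x n c Tv) u = (\<Sum>T\<in>{T \<in> strategies n k. u \<in> C n T} \<inter> X. 1 / real w)"
    unfolding seeker_payoff_def gx_eq by (rule sum.inter_restrict[symmetric, OF fs])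
  also have "{T \<in> strategies n k. u \<in> C n T} \<inter> X = {T \<in> X. u \<in> C n T}" using X_strat by auto
  also have "(\<Sum>T\<in>{T \<in> X. u \<in> C n T}. 1 / real w) = real (card J) / real w"
    unfolding JX using cJ by simp
  finally have e: "seeker_payoff n k (greedy_x n c Tv) u = real (card J) / real w" .
  have "h \<le> card J" using coverage[OF assms] unfolding J_def .
  then show ?thesis unfolding e using w0 by (simp add: divide_right_mono)
qed

end

lemma duality:
  assumes x: "x \<in> seeker_dists n k" and y: "y \<in> hider_dists n" and n0: "0 < n"
  shows "Min (seeker_payoff n k x ` {..<n}) \<le> Max (hider_payoff n y ` strategies n k)"
proof -
  let ?St = "strategies n k"
  define m where "m = Min (seeker_payoff n k x ` {..<n})"
  define M where "M = Max (hider_payoff n y ` ?St)"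
  have x0: "\<And>T. T \<in> ?St \<Longrightarrow> 0 \<le> x T" and xs: "(\<Sum>T\<in>?St. x T) = 1" using x unfolding seeker_dists_def by auto
  have y0: "\<And>v. v < n \<Longrightarrow> 0 \<le> y v" and ys: "(\<Sum>v<n. y v) = 1" using y unfolding hider_dists_def by auto
  have mle: "m \<le> seeker_payoff n k x v" if "v < n" for v
    unfolding m_def using that by (intro Min_le) auto
  have Mge: "hider_payoff n y T \<le> M" if "T \<in> ?St" for T
    unfolding M_def using that finite_strategies by (intro Max_ge) auto
  have "m = (\<Sum>v<n. y v * m)" using ys by (simp add: sum_distrib_right[symmetric])
  also have "\<dots> \<le> (\<Sum>v<n. y v * seeker_payoff n k x v)"
    by (intro sum_mono mult_left_mono mle y0) auto
  also have "\<dots> = (\<Sum>v<n. \<Sum>T\<in>?St. if v \<in> C n T then y v * x T else 0)"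
  proof (intro sum.cong refl)
    fix v
    have "seeker_payoff n k x v = (\<Sum>T\<in>?St. if v \<in> C n T then x T else 0)"
      unfolding seeker_payoff_def by (rule sum.inter_filter[OF finite_strategies])
    then show "y v * seeker_payoff n k x v = (\<Sum>T\<in>?St. if v \<in> C n T then y v * x T else 0)"
      by (simp add: sum_distrib_left if_distrib cong: if_cong)
  qed
  also have "\<dots> = (\<Sum>T\<in>?St. \<Sum>v<n. if v \<in> C n T then y v * x T else 0)"
    by (rule sum.swap)
  also have "\<dots> = (\<Sum>T\<in>?St. x T * hider_payoff n y T)"
  proof (intro sum.cong refl)
    fix T assume T: "T \<in> ?St"
    have CT: "C n T \<subseteq> {..<n}" using C_sub[OF T n0] .
    have "(\<Sum>v<n. if v \<in> C n T then y v * x T else 0) = (\<Sum>v\<in>{..<n} \<inter> C n T. y v * x T)"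
      by (rule sum.inter_restrict[symmetric]) simp
    also have "{..<n} \<inter> C n T = C n T" using CT by auto
    also have "(\<Sum>v\<in>C n T. y v * x T) = (\<Sum>v\<in>C n T. y v) * x T" by (rule sum_distrib_right[symmetric])
    finally show "(\<Sum>v<n. if v \<in> C n T then y v * x T else 0) = x T * hider_payoff n y T"
      unfolding hider_payoff_def by (simp only: mult.commute)
  qed
  also have "\<dots> \<le> (\<Sum>T\<in>?St. x T * M)"
    by (intro sum_mono mult_left_mono Mge x0)
  also have "\<dots> = M" using xs by (simp add: sum_distrib_right[symmetric])
  finally show ?thesis unfolding m_def M_def .
qed

lemma hider_payoff_le:
  fixes Y G :: "nat \<Rightarrow> real" and y :: "nat \<Rightarrow> real"
  assumes Y0: "\<And>u. 0 \<le> Y u"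
    and win: "\<And>a l. (\<Sum>u\<in>{a<..a+l}. Y u) \<le> G l"
    and SG: "\<And>l1 l2. G l1 + G l2 \<le> G (l1 + l2 + 1)"
    and W0: "0 < W"
    and yout: "\<And>v. v < n \<Longrightarrow> \<not> (1 \<le> v \<and> v \<le> n - 2) \<Longrightarrow> y v = 0"
    and yin: "\<And>v. 1 \<le> v \<Longrightarrow> v \<le> n - 2 \<Longrightarrow> y v = Y v / W"
    and T: "T \<in> strategies n k" and kB: "2 ^ k - 1 \<le> B + 1" and n0: "0 < n"
  shows "hider_payoff n y T \<le> G B / W"
proof -
  define S where "S = C n T \<inter> {1..n-2}"
  have CT: "C n T \<subseteq> {..<n}" using C_sub[OF T n0] .
  have "hider_payoff n y T = (\<Sum>v\<in>C n T. if v \<in> {1..n-2} then y v else 0)"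
    unfolding hider_payoff_def using CT yout by (intro sum.cong) auto
  also have "\<dots> = (\<Sum>v\<in>S. y v)" unfolding S_def
    by (rule sum.inter_restrict[symmetric]) (use CT finite_subset in auto)
  also have "\<dots> = (\<Sum>v\<in>S. Y v) / W" unfolding S_def using yin by (simp add: sum_divide_distrib)
  finally have e: "hider_payoff n y T = (\<Sum>v\<in>S. Y v) / W" .
  have finS: "finite S" unfolding S_def by simp
  have S0: "0 \<notin> S" unfolding S_def by simp
  have "card (Ed S) \<le> 2 ^ k - 1" using Ed_bound[OF T] S_def by auto
  then have "card (Ed S) \<le> B + 1" using kB by simp
  then have "(\<Sum>v\<in>S. Y v) \<le> G B" using peel_bound[OF Y0 win SG finS S0] by simp
  then show ?thesis unfolding e using W0 by (simp add: divide_right_mono)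
qed

lemma nc_struct:
  fixes n c h w :: nat
  assumes c0: "0 < c" and n2: "2 \<le> n" and w0: "0 < w" and eq: "h * (n - 1) = w * c"
    and minw: "\<And>h' w'. 0 < h' \<Longrightarrow> 0 < w' \<Longrightarrow> w' < w \<Longrightarrow> h' * (n - 1) \<noteq> w' * c"
  shows "c = h * gcd c (n - 1)" "n - 1 = w * gcd c (n - 1)"
proof -
  define N where "N = n - 1"
  define d where "d = gcd N c"
  have dd: "gcd c (n - 1) = d" unfolding d_def N_def by (simp add: gcd.commute)
  have d0: "0 < d" unfolding d_def using c0 by simp
  define a where "a = N div d"
  define b where "b = c div d"
  have Na: "N = a * d" unfolding a_def d_def by simp
  have cb: "c = b * d" unfolding b_def d_def by simp
  have cop: "coprime a b" unfolding a_def b_def d_def using c0 by (intro div_gcd_coprime) simp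
  have a0: "0 < a" using Na n2 N_def by (cases a) auto
  have b0: "0 < b" using cb c0 by (cases b) auto
  have "h * a * d = w * b * d" using eq Na cb N_def by (simp add: mult.assoc)
  then have hab: "h * a = w * b" using d0 by simp
  then have e2: "w * b = a * h" by (simp add: mult.commute)
  have "a dvd w * b" unfolding e2 by simp
  then have "a dvd w" using cop by (simp add: coprime_dvd_mult_left_iff)
  then have aw: "a \<le> w" using w0 by (simp add: dvd_imp_le)
  have "\<not> a < w"
  proof
    assume "a < w"
    moreover have "b * (a * d) = a * (b * d)" by (rule mult.left_commute)
    then have "b * (n - 1) = a * c" using Na cb N_def by simp
    ultimately show False using minw[of b a] b0 a0 by simp
  qed
  then have "a = w" using aw by simp
  then have "h = b" using hab a0 by (simp add: mult.commute)
  show "c = h * gcd c (n - 1)" using cb \<open>h = b\<close> dd by simp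
  show "n - 1 = w * gcd c (n - 1)" using Na \<open>a = w\<close> dd N_def by simp
qed

theorem theorem3p2:
  fixes k n c h w :: nat and Tv :: "nat \<Rightarrow> strat"
  assumes "2 \<le> k" and "2 ^ k < n" and "c = 2 ^ k - 2"
    and "0 < h" and "0 < w" and "w \<le> n - 2"
    and "int h * (int n - 1) - int w * int c = (if gcd c (n - 1) = 1 then 1 else 0)"
    and "\<forall>h' w'. 0 < h' \<and> 0 < w' \<and> w' < w \<longrightarrow>
           int h' * (int n - 1) - int w' * int c \<noteq> (if gcd c (n - 1) = 1 then 1 else 0)"
    and "\<forall>v<n. v \<noteq> 1 \<longrightarrow> Tv v \<in> strategies n k \<and> C n (Tv v) = cover_target n c v"
  shows "lower_value n k = real h / real w \<and> upper_value n k = real h / real w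
    \<and> greedy_x n c Tv \<in> seeker_dists n k
    \<and> Min (seeker_payoff n k (greedy_x n c Tv) ` {..<n}) = real h / real w
    \<and> (gcd c (n - 1) > 1 \<longrightarrow> y_nc n c \<in> hider_dists n
         \<and> Max (hider_payoff n (y_nc n c) ` strategies n k) = real h / real w)
    \<and> (gcd c (n - 1) = 1 \<longrightarrow> y_cp n c h w \<in> hider_dists n
         \<and> Max (hider_payoff n (y_cp n c h w) ` strategies n k) = real h / real w)"
proof -
  have k4: "(4::nat) \<le> 2 ^ k"
  proof -
    have "(2::nat) ^ 2 \<le> 2 ^ k" using assms(1) by (rule power_increasing) simp
    then show ?thesis by simp
  qed
  have c2: "2 \<le> c" using assms(3) k4 by simp
  have cn: "c + 3 \<le> n" using assms(2,3) k4 by simp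
  have kc: "2 ^ k - 1 = c + 1" using assms(3) k4 by simp
  have n0: "0 < n" using cn by simp
  have n1: "int n - 1 = int (n - 1)" using n0 by simp
  define e where "e = (if gcd c (n - 1) = 1 then 1 else (0::nat))"
  have ie: "int e = (if gcd c (n - 1) = 1 then 1 else 0)" unfolding e_def by simp
  have i7: "int h * int (n - 1) - int w * int c = int e" using assms(7) unfolding n1 ie .
  have ia: "int (h * (n - 1)) = int h * int (n - 1)" by (rule of_nat_mult)
  have ib: "int (w * c) = int w * int c" by (rule of_nat_mult)
  have "int (h * (n - 1)) = int (w * c) + int e" using i7 ia ib by linarith
  then have "int (h * (n - 1)) = int (w * c + e)" by (simp only: of_nat_add)
  then have eqn: "h * (n - 1) = w * c + e" by (simp only: of_nat_eq_iff)
  have minw: "h' * (n - 1) \<noteq> w' * c + e" if "0 < h'" "0 < w'" "w' < w" for h' w'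
  proof
    assume "h' * (n - 1) = w' * c + e"
    then have "int (h' * (n - 1)) = int (w' * c) + int e" by simp
    moreover have "int (h' * (n - 1)) = int h' * int (n - 1)" by (rule of_nat_mult)
    moreover have "int (w' * c) = int w' * int c" by (rule of_nat_mult)
    ultimately have "int h' * (int n - 1) - int w' * int c = int e" unfolding n1 by linarith
    then have "int h' * (int n - 1) - int w' * int c = (if gcd c (n - 1) = 1 then 1 else 0)" unfolding ie .
    then show False using assms(8) that by blast
  qed
  interpret G: gctx n c h w k Tv
  proof (unfold_locales)
    show "2 \<le> c" by (fact c2)
    show "c + 3 \<le> n" by (fact cn)
    show "0 < h" by (fact assms(4))
    show "0 < w" by (fact assms(5))
    show "w \<le> n - 2" by (fact assms(6))
    show "h * (n - 1) = w * c + (if gcd c (n - 1) = 1 then 1 else 0)" using eqn unfolding e_def .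
    show "\<And>h' w'. 0 < h' \<Longrightarrow> 0 < w' \<Longrightarrow> w' < w \<Longrightarrow> h' * (n - 1) \<noteq> w' * c + (if gcd c (n - 1) = 1 then 1 else 0)"
      using minw unfolding e_def by blast
    show "\<And>v. v < n \<Longrightarrow> v \<noteq> 1 \<Longrightarrow> Tv v \<in> strategies n k \<and> C n (Tv v) = cover_target n c v"
      using assms(9) by blast
  qed
  let ?St = "strategies n k"
  let ?V = "real h / real w"
  let ?gx = "greedy_x n c Tv"
  have gxd: "?gx \<in> seeker_dists n k" by (rule G.gx_dist)
  have fin_img: "finite (seeker_payoff n k ?gx ` {..<n})" "seeker_payoff n k ?gx ` {..<n} \<noteq> {}" using n0 by auto
  have minG: "?V \<le> Min (seeker_payoff n k ?gx ` {..<n})"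
    using fin_img G.payoff_ge by (subst Min_ge_iff) auto
  have finSt: "finite (hider_payoff n y ` ?St)" "hider_payoff n y ` ?St \<noteq> {}" for y
    using finite_strategies Leaf_strategies[of n k] by auto
  have hider: "\<exists>ys. ys \<in> hider_dists n \<and> Max (hider_payoff n ys ` ?St) \<le> ?V
      \<and> (gcd c (n - 1) > 1 \<longrightarrow> ys = y_nc n c) \<and> (gcd c (n - 1) = 1 \<longrightarrow> ys = y_cp n c h w)"
  proof (cases "gcd c (n - 1) = 1")
    case True
    have eq1: "h * (n - 1) = w * c + 1" using eqn True unfolding e_def by simp
    have hc: "h \<le> c"
    proof (rule ccontr)
      assume "\<not> h \<le> c"
      then have "(c + 1) * (n - 1) \<le> h * (n - 1)" by (intro mult_le_mono1) simp
      moreover have "w * c \<le> (n - 2) * c" using assms(6) by (rule mult_le_mono1)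
      moreover have "(c + 1) * (n - 1) = (n - 2) * c + c + (n - 1)" using cn
        by (cases n) (auto simp: algebra_simps)
      ultimately show False using eq1 cn by linarith
    qed
    interpret S: segs h c using assms(4) hc by unfold_locales
    have wn: "w \<le> n" and n3: "3 \<le> n" using assms(6) cn by auto
    have yf: "y_cp n c h w i = (if 1 \<le> i \<and> i \<le> n - 2 then S.Y i / real w else 0)" for i
      using ycp_formula[OF assms(4) hc eq1 assms(5) wn n3] .
    have hd: "y_cp n c h w \<in> hider_dists n"
      unfolding hider_dists_def using yf S.Y_nonneg ycp_sum[OF assms(4) hc eq1 assms(5) wn n3] by auto
    have b: "hider_payoff n (y_cp n c h w) T \<le> ?V" if "T \<in> ?St" for T
    proof -
      have "hider_payoff n (y_cp n c h w) T \<le> S.Gw c / real w"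
        by (rule hider_payoff_le[where Y = S.Y and G = S.Gw and W = "real w" and B = c])
           (use S.Y_nonneg S.window S.Gw_SG assms(5) yf that kc n0 in auto)
      then show ?thesis using S.Gw_q by simp
    qed
    show ?thesis using hd b finSt True by (intro exI[of _ "y_cp n c h w"]) (auto simp: Max_le_iff)
  next
    case False
    define d where "d = gcd c (n - 1)"
    have d1: "1 < d" using False c2 unfolding d_def by (cases "gcd c (n - 1)") auto
    have eq0: "h * (n - 1) = w * c" using eqn False unfolding e_def by simp
    have st: "c = h * d" "n - 1 = w * d"
      using nc_struct[of c n w h] c2 cn assms(5) eq0 minw False unfolding e_def d_def by auto
    have wdef: "(n - 1) div d = w" using st d1 by simp
    have ync: "y_nc n c v = (if d dvd v then 0 else 1 / (real w * real (d - 1)))" for v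
      unfolding y_nc_def Let_def d_def[symmetric] wdef by simp
    have W0: "0 < real w * real (d - 1)" using d1 assms(5) by simp
    have hd: "y_nc n c \<in> hider_dists n"
    proof -
      have "(\<Sum>v<n. y_nc n c v) = (\<Sum>v<n. (if d dvd v then 0 else 1::real)) / (real w * real (d - 1))"
        unfolding ync sum_divide_distrib by (intro sum.cong) auto
      also have "(\<Sum>v<n. (if d dvd v then 0 else 1::real)) = (\<Sum>v\<in>{0<..0 + (n - 1)}. (if d dvd v then 0 else 1::real))"
      proof -
        have "{..<n} = insert 0 {0<..0 + (n - 1)}" using n0 by auto
        then show ?thesis by simp
      qed
      also have "\<dots> = real (n - 1) - (real ((n - 1) div d) - real (0 div d))"
        using nc_window_eq[of d 0 "n - 1"] d1 by simp
      also have "\<dots> = real w * real (d - 1)" using st wdef d1 by (simp add: algebra_simps of_nat_diff)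
      finally have "(\<Sum>v<n. y_nc n c v) = real w * real (d - 1) / (real w * real (d - 1))" .
      then have "(\<Sum>v<n. y_nc n c v) = 1" using assms(5) d1 by simp
      then show ?thesis unfolding hider_dists_def using ync by auto
    qed
    have b: "hider_payoff n (y_nc n c) T \<le> ?V" if "T \<in> ?St" for T
    proof -
      have yout: "y_nc n c v = 0" if "v < n" "\<not> (1 \<le> v \<and> v \<le> n - 2)" for v
      proof -
        have "v = 0 \<or> v = n - 1" using that by linarith
        then have "d dvd v" using st by auto
        then show ?thesis using ync by simp
      qed
      have "hider_payoff n (y_nc n c) T \<le> (real c - real (c div d)) / (real w * real (d - 1))"
        by (rule hider_payoff_le[where Y = "\<lambda>u. if d dvd u then 0 else 1" and G = "\<lambda>l. real l - real (l div d)"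
              and W = "real w * real (d - 1)" and B = c])
           (use nc_window nc_SG d1 W0 yout ync that kc n0 in auto)
      also have "real c - real (c div d) = real h * real (d - 1)" using st d1 by (simp add: algebra_simps of_nat_diff)
      also have "real h * real (d - 1) / (real w * real (d - 1)) = ?V" using d1 by simp
      finally show ?thesis .
    qed
    have "1 < gcd c (n - 1)" using d1 d_def by simp
    then show ?thesis using hd b finSt False by (intro exI[of _ "y_nc n c"]) (auto simp: Max_le_iff)
  qed
  then obtain ys where ys: "ys \<in> hider_dists n" "Max (hider_payoff n ys ` ?St) \<le> ?V"
    "gcd c (n - 1) > 1 \<longrightarrow> ys = y_nc n c" "gcd c (n - 1) = 1 \<longrightarrow> ys = y_cp n c h w" by blast
  have dG: "Min (seeker_payoff n k ?gx ` {..<n}) \<le> Max (hider_payoff n ys ` ?St)"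
    by (rule duality[OF gxd ys(1) n0])
  have minEq: "Min (seeker_payoff n k ?gx ` {..<n}) = ?V" using minG dG ys(2) by linarith
  have maxEq: "Max (hider_payoff n ys ` ?St) = ?V" using minG dG ys(2) by linarith
  have low: "lower_value n k = ?V"
    unfolding lower_value_def
  proof (rule cSup_eq_maximum)
    show "?V \<in> (\<lambda>x. Min (seeker_payoff n k x ` {..<n})) ` seeker_dists n k"
      using gxd minEq by (metis image_eqI)
    fix z assume "z \<in> (\<lambda>x. Min (seeker_payoff n k x ` {..<n})) ` seeker_dists n k"
    then obtain x where x: "x \<in> seeker_dists n k" "z = Min (seeker_payoff n k x ` {..<n})" by auto
    show "z \<le> ?V" using duality[OF x(1) ys(1) n0] x(2) ys(2) by linarith
  qed
  have up: "upper_value n k = ?V"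
    unfolding upper_value_def
  proof (rule cInf_eq_minimum)
    show "?V \<in> (\<lambda>y. Max (hider_payoff n y ` ?St)) ` hider_dists n"
      using ys(1) maxEq by (metis image_eqI)
    fix z assume "z \<in> (\<lambda>y. Max (hider_payoff n y ` ?St)) ` hider_dists n"
    then obtain y where y: "y \<in> hider_dists n" "z = Max (hider_payoff n y ` ?St)" by auto
    show "?V \<le> z" using duality[OF gxd y(1) n0] y(2) minEq by linarith
  qed
  have p5: "gcd c (n - 1) > 1 \<longrightarrow> y_nc n c \<in> hider_dists n
         \<and> Max (hider_payoff n (y_nc n c) ` ?St) = ?V"
    using ys(1,3) maxEq by auto
  have p6: "gcd c (n - 1) = 1 \<longrightarrow> y_cp n c h w \<in> hider_dists n
         \<and> Max (hider_payoff n (y_cp n c h w) ` ?St) = ?V"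
    using ys(1,4) maxEq by auto
  show ?thesis using low up gxd minEq p5 p6 by blast
qed

end
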